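(* Assume $q=p$ and let $P=[1:0:0]\in C$. The higher ramification groups in lower numbering of $P$ under the action of $G$ are $$G_{P,i}=\begin{cases}B&i\in\{-1,0\},\\ U& 1\leq i\leq p+1,\\ 1& i\geq p+2.\end{cases}$$
   Context: $p$ odd prime, $\mathbb{F}$ algebraically closed of characteristic $p$, $C$ the Drinfeld curve $XY^p-X^pY-Z^{p+1}=0$ in $\mathbb{P}^2(\mathbb{F})$, $G=SL_2(\mathbb{F}_p)$ acting by $\begin{pmatrix}\alpha&\beta\\ \gamma&\delta\end{pmatrix}\cdot[X:Y:Z]=[\alpha X+\beta Y:\gamma X+\delta Y:Z]$; $U$ = upper unitriangular matrices, $B$ = upper triangular matrices in $G$. Lower ramification groups: $G_{P,-1}=G_P$ (stabilizer) and $G_{P,i}=\{g\in G_P:\operatorname{ord}_P(g^*t-t)\geq i+1\}$ for $i\geq0$, $t$ a local parameter at $P$. *)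

theory Defs
  imports "HOL-Computational_Algebra.Polynomial"
begin

definition alg_closed :: "'a::field itself \<Rightarrow> bool" where
  "alg_closed _ \<longleftrightarrow> (\<forall>f::'a poly. degree f > 0 \<longrightarrow> (\<exists>x. poly f x = 0))"

type_synonym 'a pt = "'a \<times> 'a \<times> 'a"
type_synonym 'a rep = "('a pt \<Rightarrow> 'a) \<times> ('a pt \<Rightarrow> 'a)"

definition hpoly :: "nat \<Rightarrow> ('a::field pt \<Rightarrow> 'a) \<Rightarrow> bool" where
  "hpoly d f \<longleftrightarrow> (\<exists>c :: nat \<Rightarrow> nat \<Rightarrow> 'a.
      f = (\<lambda>(x,y,z). \<Sum>i\<le>d. \<Sum>j\<le>d - i. c i j * x ^ i * y ^ j * z ^ (d - i - j)))"

definition on_C :: "nat \<Rightarrow> 'a::field pt \<Rightarrow> bool" where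
  "on_C p v \<longleftrightarrow> v \<noteq> (0,0,0) \<and>
     (case v of (X,Y,Z) \<Rightarrow> X * Y ^ p - X ^ p * Y - Z ^ (p + 1) = 0)"

definition proj_eq :: "'a::field pt \<Rightarrow> 'a pt \<Rightarrow> bool" where
  "proj_eq v w \<longleftrightarrow> (\<exists>c. c \<noteq> 0 \<and> (case v of (x,y,z) \<Rightarrow> w = (c*x, c*y, c*z)))"

text \<open>A rational function on C, represented as a quotient a/b of homogeneous
  polynomials of equal degree with b not vanishing identically on C.\<close>
definition ratfun :: "nat \<Rightarrow> 'a::field rep \<Rightarrow> bool" where
  "ratfun p r \<longleftrightarrow> (\<exists>d. hpoly d (fst r) \<and> hpoly d (snd r) \<and> (\<exists>v. on_C p v \<and> snd r v \<noteq> 0))"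

definition feq :: "nat \<Rightarrow> 'a::field rep \<Rightarrow> 'a rep \<Rightarrow> bool" where
  "feq p r s \<longleftrightarrow> (\<forall>v. on_C p v \<longrightarrow> fst r v * snd s v = fst s v * snd r v)"

definition rmul :: "'a::field rep \<Rightarrow> 'a rep \<Rightarrow> 'a rep" where
  "rmul r s = ((\<lambda>v. fst r v * fst s v), (\<lambda>v. snd r v * snd s v))"

definition radd :: "'a::field rep \<Rightarrow> 'a rep \<Rightarrow> 'a rep" where
  "radd r s = ((\<lambda>v. fst r v * snd s v + fst s v * snd r v), (\<lambda>v. snd r v * snd s v))"

definition rsub :: "'a::field rep \<Rightarrow> 'a rep \<Rightarrow> 'a rep" where
  "rsub r s = ((\<lambda>v. fst r v * snd s v - fst s v * snd r v), (\<lambda>v. snd r v * snd s v))"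

definition rone :: "'a::field rep" where "rone = ((\<lambda>v. 1), (\<lambda>v. 1))"
definition rzero :: "'a::field rep" where "rzero = ((\<lambda>v. 0), (\<lambda>v. 1))"

primrec rprodn :: "(nat \<Rightarrow> 'a::field rep) \<Rightarrow> nat \<Rightarrow> 'a rep" where
  "rprodn f 0 = rone"
| "rprodn f (Suc n) = rmul (rprodn f n) (f n)"

primrec rsumn :: "(nat \<Rightarrow> 'a::field rep) \<Rightarrow> nat \<Rightarrow> 'a rep" where
  "rsumn f 0 = rzero"
| "rsumn f (Suc n) = radd (rsumn f n) (f n)"

definition P0 :: "'a::field pt" where "P0 = (1, 0, 0)"

definition local_ring :: "nat \<Rightarrow> 'a::field pt \<Rightarrow> 'a rep set" where
  "local_ring p P = {r. ratfun p r \<and> snd r P \<noteq> 0}"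

definition max_ideal :: "nat \<Rightarrow> 'a::field pt \<Rightarrow> 'a rep set" where
  "max_ideal p P = {r \<in> local_ring p P. fst r P = 0}"

text \<open>h lies in the n-th power of m_P, i.e. ord_P(h) >= n.\<close>
definition in_mpow :: "nat \<Rightarrow> 'a::field pt \<Rightarrow> nat \<Rightarrow> 'a rep \<Rightarrow> bool" where
  "in_mpow p P n h \<longleftrightarrow> h \<in> local_ring p P \<and>
     (\<exists>k (s :: nat \<Rightarrow> 'a rep) (r :: nat \<Rightarrow> nat \<Rightarrow> 'a rep).
        (\<forall>j<k. s j \<in> local_ring p P \<and> (\<forall>l<n. r j l \<in> max_ideal p P)) \<and>
        feq p h (rsumn (\<lambda>j. rmul (s j) (rprodn (r j) n)) k))"

definition local_param :: "nat \<Rightarrow> 'a::field pt \<Rightarrow> 'a rep \<Rightarrow> bool" where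
  "local_param p P t \<longleftrightarrow> t \<in> max_ideal p P \<and> \<not> in_mpow p P 2 t"

type_synonym 'a mat2 = "'a \<times> 'a \<times> 'a \<times> 'a"

definition act :: "'a::field mat2 \<Rightarrow> 'a pt \<Rightarrow> 'a pt" where
  "act g v = (case g of (a,b,c,d) \<Rightarrow> case v of (X,Y,Z) \<Rightarrow> (a*X + b*Y, c*X + d*Y, Z))"

definition pull :: "'a::field mat2 \<Rightarrow> 'a rep \<Rightarrow> 'a rep" where
  "pull g r = (fst r \<circ> act g, snd r \<circ> act g)"

definition Fp :: "'a::field set" where "Fp = range of_nat"

definition SL2 :: "'a::field mat2 set" where
  "SL2 = {(a,b,c,d). a \<in> Fp \<and> b \<in> Fp \<and> c \<in> Fp \<and> d \<in> Fp \<and> a*d - b*c = 1}"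

definition Bor :: "'a::field mat2 set" where
  "Bor = {(a,b,c,d) \<in> SL2. c = 0}"

definition Unip :: "'a::field mat2 set" where
  "Unip = {(a,b,c,d) \<in> SL2. a = 1 \<and> c = 0 \<and> d = 1}"

definition stab :: "'a::field pt \<Rightarrow> 'a mat2 set" where
  "stab P = {g \<in> SL2. proj_eq P (act g P)}"

definition ram_group :: "nat \<Rightarrow> 'a::field pt \<Rightarrow> 'a rep \<Rightarrow> int \<Rightarrow> 'a mat2 set" where
  "ram_group p P t i =
     (if i = -1 then stab P
      else {g \<in> stab P. in_mpow p P (nat (i + 1)) (rsub (pull g t) t)})"

end

theory Submission
  imports Defs "HOL-Computational_Algebra.Primes"
begin

inductive hp :: "nat \<Rightarrow> ('a::field pt \<Rightarrow> 'a) \<Rightarrow> bool" where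
  mono: "i + j \<le> d \<Longrightarrow> hp d (\<lambda>v. c * fst v ^ i * fst (snd v) ^ j * snd (snd v) ^ (d - i - j))"
| add: "hp d f \<Longrightarrow> hp d g \<Longrightarrow> hp d (\<lambda>v. f v + g v)"

lemma hp_cong: "hp d f \<Longrightarrow> (\<And>v. f v = g v) \<Longrightarrow> hp d g"
proof -
  assume "hp d f" "\<And>v. f v = g v"
  then have "f = g" by auto
  then show ?thesis using \<open>hp d f\<close> by simp
qed

lemma hp_zero: "hp d (\<lambda>v. 0)"
  using hp.mono[of 0 0 d 0] by simp

lemma hp_zero': "(\<And>v. f v = 0) \<Longrightarrow> hp d f"
  using hp_cong[OF hp_zero] by metis

lemma hp_const: "hp 0 (\<lambda>v. c)"
  using hp.mono[of 0 0 0 c] by simp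

lemma hp_X: "hp 1 (\<lambda>v. fst v)"
  using hp.mono[of 1 0 1 1] by simp
lemma hp_Y: "hp 1 (\<lambda>v. fst (snd v))"
  using hp.mono[of 0 1 1 1] by simp
lemma hp_Z: "hp 1 (\<lambda>v. snd (snd v))"
  using hp.mono[of 0 0 1 1] by simp

lemma hp_smult: "hp d f \<Longrightarrow> hp d (\<lambda>v. c * f v)"
proof (induction rule: hp.induct)
  case (mono i j d c')
  then show ?case using hp.mono[of i j d "c*c'"] by (simp add: mult.assoc)
next
  case (add d f g)
  then show ?case using hp.add[OF add.IH] by (simp add: distrib_left)
qed

lemma hp_neg: "hp d f \<Longrightarrow> hp d (\<lambda>v. - f v)"
  using hp_smult[of d f "-1"] by simp

lemma hp_diff: "hp d f \<Longrightarrow> hp d g \<Longrightarrow> hp d (\<lambda>v. f v - g v)"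
  using hp.add[of d f "\<lambda>v. - g v"] hp_neg[of d g] by simp

lemma hp_mult_mono:
  assumes "hp e g" "i + j \<le> d"
  shows "hp (d + e) (\<lambda>v. (c * fst v ^ i * fst (snd v) ^ j * snd (snd v) ^ (d - i - j)) * g v)"
  using assms(1)
proof (induction rule: hp.induct)
  case (mono i' j' e c')
  have "hp (d + e) (\<lambda>v. (c*c') * fst v ^ (i+i') * fst (snd v) ^ (j+j') * snd (snd v) ^ ((d+e) - (i+i') - (j+j')))"
    by (rule hp.mono) (use mono assms in auto)
  then show ?case
    by (rule hp_cong) (use mono assms in \<open>auto simp: power_add algebra_simps simp flip: power_add\<close>)
next
  case (add e f g)
  then show ?case using hp.add[OF add.IH] by (simp add: distrib_left)
qed

lemma hp_mult: "hp d f \<Longrightarrow> hp e g \<Longrightarrow> hp (d + e) (\<lambda>v. f v * g v)"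
proof (induction rule: hp.induct)
  case (mono i j d c)
  then show ?case using hp_mult_mono by blast
next
  case (add d f1 f2)
  then show ?case using hp.add[OF add.IH] by (simp add: distrib_right)
qed

lemma hp_power: "hp 1 f \<Longrightarrow> hp n (\<lambda>v. f v ^ n)"
proof (induction n)
  case 0 then show ?case using hp_const[of 1] by simp
next
  case (Suc n)
  then show ?case using hp_mult[of 1 f n "\<lambda>v. f v ^ n"] by simp
qed

lemma hp_homog: "hp d f \<Longrightarrow> f (a*x, a*y, a*z) = a ^ d * f (x, y, z)"
proof (induction rule: hp.induct)
  case (mono i j d c)
  have "a ^ d = a ^ i * a ^ j * a ^ (d - i - j)" using mono by (simp flip: power_add)
  then show ?case by (simp add: power_mult_distrib)
next
  case (add d f g)
  then show ?case by (simp add: distrib_left)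
qed

lemma hp_comp_act: "hp d f \<Longrightarrow> hp d (\<lambda>v. f (act g v))"
proof (induction rule: hp.induct)
  case (mono i j d c)
  obtain a b c' e where g: "g = (a,b,c',e)" by (cases g) auto
  have l1: "hp 1 (\<lambda>v. a * fst v + b * fst (snd v))"
    using hp.add[OF hp_smult[OF hp_X, of a] hp_smult[OF hp_Y, of b]] by simp
  have l2: "hp 1 (\<lambda>v. c' * fst v + e * fst (snd v))"
    using hp.add[OF hp_smult[OF hp_X, of c'] hp_smult[OF hp_Y, of e]] by simp
  have "hp (i + j + (d - i - j)) (\<lambda>v. ((a * fst v + b * fst (snd v))^i * (c' * fst v + e * fst (snd v))^j) * snd (snd v) ^ (d-i-j))"
    by (intro hp_mult hp_power l1 l2 hp_Z)
  then have "hp d (\<lambda>v. ((a * fst v + b * fst (snd v))^i * (c' * fst v + e * fst (snd v))^j) * snd (snd v) ^ (d-i-j))"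
    using mono by simp
  from hp_smult[OF this, of c] show ?case
    by (rule hp_cong) (auto simp: act_def g split: prod.splits simp: mult.assoc)
next
  case (add d f g)
  then show ?case using hp.add by blast
qed

lemma hp_sum: "finite I \<Longrightarrow> (\<And>i. i \<in> I \<Longrightarrow> hp d (F i)) \<Longrightarrow> hp d (\<lambda>v. \<Sum>i\<in>I. F i v)"
proof (induction I rule: finite_induct)
  case empty then show ?case by (simp add: hp_zero)
next
  case (insert x J)
  then show ?case using hp.add[of d "F x" "\<lambda>v. \<Sum>i\<in>J. F i v"] by auto
qed

lemma hpoly_hp: "hpoly d f \<Longrightarrow> hp d f"
proof -
  assume "hpoly d f"
  then obtain c where f: "f = (\<lambda>(x,y,z). \<Sum>i\<le>d. \<Sum>j\<le>d - i. c i j * x ^ i * y ^ j * z ^ (d - i - j))"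
    unfolding hpoly_def by blast
  have "hp d (\<lambda>v. \<Sum>i\<le>d. \<Sum>j\<le>d - i. c i j * fst v ^ i * fst (snd v) ^ j * snd (snd v) ^ (d - i - j))"
    by (intro hp_sum hp.mono) auto
  then show ?thesis by (rule hp_cong) (auto simp: f split: prod.splits)
qed

lemma hpoly_add: "hpoly d f \<Longrightarrow> hpoly d g \<Longrightarrow> hpoly d (\<lambda>v. f v + g v)"
proof -
  assume "hpoly d f" "hpoly d g"
  then obtain c c' where f: "f = (\<lambda>(x,y,z). \<Sum>i\<le>d. \<Sum>j\<le>d - i. c i j * x ^ i * y ^ j * z ^ (d - i - j))"
    and g: "g = (\<lambda>(x,y,z). \<Sum>i\<le>d. \<Sum>j\<le>d - i. c' i j * x ^ i * y ^ j * z ^ (d - i - j))"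
    unfolding hpoly_def by blast
  show ?thesis unfolding hpoly_def
  proof (rule exI[of _ "\<lambda>i j. c i j + c' i j"], rule ext, clarify)
    fix x y z :: 'a
    show "f (x,y,z) + g (x,y,z) = (\<Sum>i\<le>d. \<Sum>j\<le>d - i. (c i j + c' i j) * x ^ i * y ^ j * z ^ (d - i - j))"
      by (simp add: f g sum.distrib[symmetric] algebra_simps)
  qed
qed

lemma hpoly_mono: "i + j \<le> d \<Longrightarrow> hpoly d (\<lambda>v. c * fst v ^ i * fst (snd v) ^ j * snd (snd v) ^ (d - i - j))"
proof -
  assume ij: "i + j \<le> d"
  define c' where "c' = (\<lambda>i' j'. if i' = i \<and> j' = j then c else 0)"
  have "(\<Sum>i'\<le>d. \<Sum>j'\<le>d - i'. c' i' j' * x ^ i' * y ^ j' * z ^ (d - i' - j')) = c * x ^ i * y ^ j * z ^ (d - i - j)"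
    for x y z :: 'a
  proof -
    have "(\<Sum>i'\<le>d. \<Sum>j'\<le>d - i'. c' i' j' * x ^ i' * y ^ j' * z ^ (d - i' - j'))
        = (\<Sum>i'\<le>d. if i' = i then c * x ^ i * y ^ j * z ^ (d - i - j) else 0)"
    proof (rule sum.cong[OF refl])
      fix i' assume "i' \<in> {..d}"
      show "(\<Sum>j'\<le>d - i'. c' i' j' * x ^ i' * y ^ j' * z ^ (d - i' - j')) = (if i' = i then c * x ^ i * y ^ j * z ^ (d - i - j) else 0)"
      proof (cases "i' = i")
        case True
        have "(\<Sum>j'\<le>d - i'. c' i' j' * x ^ i' * y ^ j' * z ^ (d - i' - j'))
           = (\<Sum>j'\<le>d - i'. if j' = j then c * x ^ i * y ^ j * z ^ (d - i - j) else 0)"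
          by (rule sum.cong) (auto simp: c'_def True)
        also have "\<dots> = c * x ^ i * y ^ j * z ^ (d - i - j)" using ij True by (simp add: sum.delta)
        finally show ?thesis using True by simp
      next
        case False
        then show ?thesis by (simp add: c'_def)
      qed
    qed
    also have "\<dots> = c * x ^ i * y ^ j * z ^ (d - i - j)" using ij by (simp add: sum.delta)
    finally show ?thesis .
  qed
  then show ?thesis unfolding hpoly_def
    by (intro exI[of _ c']) auto
qed

lemma hp_hpoly: "hp d f \<Longrightarrow> hpoly d f"
proof (induction rule: hp.induct)
  case (mono i j d c) then show ?case by (rule hpoly_mono)
next
  case (add d f g) show ?case by (rule hpoly_add[OF add.IH])
qed

lemma hp_iff_hpoly: "hpoly d f = hp d f"
  using hp_hpoly hpoly_hp by blast

definition PF :: "('a::field \<Rightarrow> 'a) \<Rightarrow> bool" where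
  "PF f \<longleftrightarrow> (\<exists>q. \<forall>z. f z = poly q z)"

lemma PF_poly: "PF (poly q)" unfolding PF_def by auto
lemma PF_const: "PF (\<lambda>z. c)" unfolding PF_def by (rule exI[of _ "[:c:]"]) auto
lemma PF_id: "PF (\<lambda>z. z)" unfolding PF_def by (rule exI[of _ "[:0,1:]"]) auto
lemma PF_add: "PF f \<Longrightarrow> PF g \<Longrightarrow> PF (\<lambda>z. f z + g z)"
  unfolding PF_def by (metis poly_add)
lemma PF_mult: "PF f \<Longrightarrow> PF g \<Longrightarrow> PF (\<lambda>z. f z * g z)"
  unfolding PF_def by (metis poly_mult)
lemma PF_diff: "PF f \<Longrightarrow> PF g \<Longrightarrow> PF (\<lambda>z. f z - g z)"
  unfolding PF_def by (metis poly_diff)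
lemma PF_uminus: "PF f \<Longrightarrow> PF (\<lambda>z. - f z)"
  unfolding PF_def by (metis poly_minus)
lemma PF_power: "PF f \<Longrightarrow> PF (\<lambda>z. f z ^ n)"
  unfolding PF_def by (metis poly_power)
lemmas PF_intros = PF_const PF_id PF_add PF_mult PF_diff PF_uminus PF_power

lemma PF_decomp: "PF e \<Longrightarrow> \<exists>e'. PF e' \<and> (\<forall>z. e z = e 0 + z * e' z)"
proof -
  assume "PF e"
  then obtain q where q: "\<And>z. e z = poly q z" unfolding PF_def by blast
  obtain a r where "q = pCons a r" by (cases q) auto
  then show ?thesis using q by (intro exI[of _ "poly r"]) (auto simp: PF_poly)
qed

lemma hp_PF: "hp d f \<Longrightarrow> PF U \<Longrightarrow> PF V \<Longrightarrow> PF W \<Longrightarrow> PF (\<lambda>z. f (U z, V z, W z))"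
proof (induction rule: hp.induct)
  case (mono i j d c)
  have "PF (\<lambda>z. c * U z ^ i * V z ^ j * W z ^ (d - i - j))"
    using mono by (intro PF_mult PF_power PF_const) auto
  then show ?case by simp
next
  case (add d f g)
  then show ?case using PF_add[of "\<lambda>z. f (U z, V z, W z)" "\<lambda>z. g (U z, V z, W z)"] by simp
qed

lemma alg_closed_infinite:
  assumes "alg_closed TYPE('a::field)"
  shows "infinite (UNIV :: 'a set)"
proof
  assume fin: "finite (UNIV :: 'a set)"
  define P :: "'a poly" where "P = (\<Prod>a\<in>UNIV. [:-a, 1:])"
  have dP: "degree P = card (UNIV :: 'a set)"
    unfolding P_def by (subst degree_prod_eq_sum_degree) auto
  have "card (UNIV :: 'a set) > 0" using fin by (simp add: finite_UNIV_card_ge_0)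
  then have "degree (P + 1) > 0" using dP
    by (metis add.commute degree_1 degree_add_eq_right)
  then obtain x where "poly (P + 1) x = 0"
    using assms unfolding alg_closed_def by blast
  moreover have "poly P x = 0" unfolding P_def poly_prod using fin
    by (intro prod_zero) auto
  ultimately show False by simp
qed

lemma PF_zero_nz:
  fixes f :: "'a::field \<Rightarrow> 'a"
  assumes inf: "infinite (UNIV :: 'a::field set)" and "PF f" and h: "\<And>z. z \<noteq> 0 \<Longrightarrow> f z = 0"
  shows "f z = 0"
proof -
  obtain q where q: "\<And>z. f z = poly q z" using assms(2) unfolding PF_def by blast
  have "q = 0"
  proof (rule ccontr)
    assume "q \<noteq> 0"
    then have fin: "finite {z. poly q z = 0}" by (rule poly_roots_finite)
    have sub: "UNIV - {0} \<subseteq> {z. poly q z = 0}" using h q by auto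
    have "finite (UNIV - {0::'a})" using finite_subset[OF sub fin] by simp
    then show False using inf by simp
  qed
  then show ?thesis using q by simp
qed

lemma PF_L:
  fixes \<psi> q :: "'a::field \<Rightarrow> 'a"
  assumes inf: "infinite (UNIV :: 'a::field set)" and "PF \<psi>" "PF q"
    and h: "\<And>z. z ^ m * \<psi> z = z ^ (Suc m) * q z"
  shows "\<psi> 0 = 0"
proof -
  have "PF (\<lambda>z. \<psi> z - z * q z)" using assms by (intro PF_diff PF_mult PF_id)
  moreover have "\<psi> z - z * q z = 0" if "z \<noteq> 0" for z
    using h[of z] that by (simp add: algebra_simps)
  ultimately have "\<psi> 0 - 0 * q 0 = 0" using PF_zero_nz[OF inf] by blast
  then show ?thesis by simp
qed

lemma PF_D:
  fixes \<alpha> \<beta> r :: "'a::field \<Rightarrow> 'a"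
  assumes inf: "infinite (UNIV :: 'a set)"
  shows "PF \<alpha> \<Longrightarrow> PF \<beta> \<Longrightarrow> PF r \<Longrightarrow> \<beta> 0 \<noteq> 0 \<Longrightarrow> (\<And>z. \<alpha> z * \<beta> z = z ^ n * r z)
    \<Longrightarrow> \<exists>q. PF q \<and> (\<forall>z. \<alpha> z = z ^ n * q z)"
proof (induction n arbitrary: \<alpha> r)
  case 0
  then show ?case by auto
next
  case (Suc n)
  have "\<alpha> 0 * \<beta> 0 = 0" using Suc.prems(5)[of 0] by simp
  then have a0: "\<alpha> 0 = 0" using Suc.prems(4) by simp
  obtain a' where a': "PF a'" "\<And>z. \<alpha> z = \<alpha> 0 + z * a' z" using PF_decomp[OF Suc.prems(1)] by blast
  have "a' z * \<beta> z - z ^ n * r z = 0" for z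
  proof (rule PF_zero_nz[OF inf, where f = "\<lambda>z. a' z * \<beta> z - z ^ n * r z"])
    show "PF (\<lambda>z. a' z * \<beta> z - z ^ n * r z)" using a' Suc.prems by (intro PF_diff PF_mult PF_power PF_id)
    fix z :: 'a assume "z \<noteq> 0"
    have "z * (a' z * \<beta> z) = z * (z ^ n * r z)"
      using Suc.prems(5)[of z] a'(2)[of z] a0 by (simp add: algebra_simps)
    then show "a' z * \<beta> z - z ^ n * r z = 0" using \<open>z \<noteq> 0\<close> by simp
  qed
  then have "\<And>z. a' z * \<beta> z = z ^ n * r z" by simp
  from Suc.IH[OF a'(1) Suc.prems(2,3,4) this] obtain q where "PF q" "\<forall>z. a' z = z ^ n * q z" by blast
  then show ?case using a' a0 by (intro exI[of _ q]) auto
qed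

definition ev :: "'a::field poly poly \<Rightarrow> 'a \<Rightarrow> 'a \<Rightarrow> 'a" where
  "ev G y z = poly (poly G [:y:]) z"

lemma ev_add[simp]: "ev (G + H) y z = ev G y z + ev H y z" by (simp add: ev_def)
lemma ev_diff[simp]: "ev (G - H) y z = ev G y z - ev H y z" by (simp add: ev_def)
lemma ev_mult[simp]: "ev (G * H) y z = ev G y z * ev H y z" by (simp add: ev_def)

lemma hp_ev: "hp d f \<Longrightarrow> \<exists>G. \<forall>y z. f (1, y, z) = ev G y z"
proof (induction rule: hp.induct)
  case (mono i j d c)
  show ?case
    by (rule exI[of _ "[:[:c:]:] * [:0,1:] ^ j * [:[:0,1:] ^ (d - i - j):]"]) (simp add: ev_def poly_power)
next
  case (add d f g)
  then obtain G H where "\<forall>y z. f (1, y, z) = ev G y z" "\<forall>y z. g (1, y, z) = ev H y z" by blast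
  then show ?case by (intro exI[of _ "G + H"]) simp
qed

lemma ev_poly_poly: "poly (poly H Y) z = ev H (poly Y z) z"
  by (induction H) (auto simp: ev_def)

lemma ev_map_poly: "poly (map_poly (\<lambda>q. poly q z) G) y = ev G y z"
  by (induction G) (auto simp: ev_def map_poly_pCons)

lemma degree_diff_eq_left: "degree (q::'a::ab_group_add poly) < degree p \<Longrightarrow> degree (p - q) = degree p"
  by (metis degree_add_eq_left degree_minus diff_conv_add_uminus)

lemma frob1:
  assumes "prime p" "CHAR('a::comm_ring_1) = p"
  shows "((x::'a) + 1) ^ p = x ^ p + 1"
proof -
  have p0: "p > 0" using assms prime_gt_0_nat by blast
  have "(x + 1) ^ p = (\<Sum>k\<le>p. of_nat (p choose k) * x ^ k * 1 ^ (p - k))"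
    by (rule binomial_ring)
  also have "\<dots> = (\<Sum>k\<le>p. of_nat (p choose k) * x ^ k)" by simp
  also have "\<dots> = (\<Sum>k\<in>{0, p}. of_nat (p choose k) * x ^ k)"
  proof (rule sum.mono_neutral_right)
    show "\<forall>i\<in>{..p} - {0, p}. of_nat (p choose i) * x ^ i = 0"
    proof
      fix i assume i: "i \<in> {..p} - {0, p}"
      have "p dvd (p choose i)" using i assms(1) p0 by (intro dvd_choose_prime) auto
      then have "of_nat (p choose i) = (0::'a)" using assms(2) by (simp add: of_nat_eq_0_iff_char_dvd)
      then show "of_nat (p choose i) * x ^ i = 0" by simp
    qed
  qed (use p0 in auto)
  also have "\<dots> = x ^ p + 1" using p0 by (simp add: add.commute)
  finally show ?thesis .
qed

lemma root_shift:
  assumes "prime p" "CHAR('a::comm_ring_1) = p" "(r::'a) ^ p - r = c"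
  shows "(r + of_nat k) ^ p - (r + of_nat k) = c"
proof (induction k)
  case 0 then show ?case using assms by simp
next
  case (Suc k)
  have e: "r + of_nat (Suc k) = (r + of_nat k) + 1" by simp
  have "(r + of_nat (Suc k)) ^ p = (r + of_nat k) ^ p + 1"
    unfolding e by (rule frob1[OF assms(1,2)])
  then show ?case using Suc unfolding e by (simp add: algebra_simps)
qed

lemma root_exists:
  assumes "alg_closed TYPE('a::field)" "p \<ge> 2"
  shows "\<exists>r::'a. r ^ p - r = c"
proof -
  define P :: "'a poly" where "P = monom 1 p - [:c, 1:]"
  have "degree [:c, 1::'a:] < degree (monom (1::'a) p)" using assms(2) by (simp add: degree_monom_eq)
  then have "degree P = p" unfolding P_def by (simp add: degree_diff_eq_left degree_monom_eq)
  then have "degree P > 0" using assms(2) by simp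
  then obtain r where "poly P r = 0" using assms(1) unfolding alg_closed_def by blast
  then show ?thesis by (intro exI[of _ r]) (simp add: P_def poly_monom algebra_simps)
qed

lemma of_nat_inj_CHAR:
  assumes "CHAR('a::comm_ring_1) = p" "i < p" "j < p" "(of_nat i :: 'a) = of_nat j"
  shows "i = j"
proof (rule ccontr)
  assume "i \<noteq> j"
  then consider "i < j" | "j < i" by linarith
  then show False
  proof cases
    case 1
    have "of_nat (j - i) = (0::'a)" using assms(4) 1 by (simp add: of_nat_diff)
    then have "p dvd (j - i)" using assms(1) by (simp add: of_nat_eq_0_iff_char_dvd)
    then show False using 1 assms(3) by (meson diff_less_mono2 less_imp_diff_less nat_dvd_not_less zero_less_diff diff_le_self le_less_trans)
  next
    case 2
    have "of_nat (i - j) = (0::'a)" using assms(4) 2 by (simp add: of_nat_diff)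
    then have "p dvd (i - j)" using assms(1) by (simp add: of_nat_eq_0_iff_char_dvd)
    then show False using 2 assms(2) by (meson diff_less_mono2 less_imp_diff_less nat_dvd_not_less zero_less_diff diff_le_self le_less_trans)
  qed
qed

lemma many_roots_zero:
  assumes "degree (R::'a::field poly) < p" "\<And>k. k < p \<Longrightarrow> poly R (r + of_nat k) = 0"
    and "CHAR('a) = p"
  shows "R = 0"
proof (rule ccontr)
  assume R: "R \<noteq> 0"
  have "(\<lambda>k. r + of_nat k) ` {..<p} \<subseteq> {x. poly R x = 0}" using assms(2) by auto
  moreover have "card ((\<lambda>k. r + (of_nat k :: 'a)) ` {..<p}) = p"
  proof (subst card_image)
    show "inj_on (\<lambda>k. r + (of_nat k :: 'a)) {..<p}"
      by (rule inj_onI) (use of_nat_inj_CHAR[OF assms(3)] in auto)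
  qed auto
  ultimately have "p \<le> card {x. poly R x = 0}"
    using poly_roots_finite[OF R] by (metis card_mono)
  also have "\<dots> \<le> degree R" by (rule card_poly_roots_bound[OF R])
  finally show False using assms(1) by simp
qed

definition Mc :: "nat \<Rightarrow> 'a::field poly poly" where
  "Mc p = monom 1 p - [:0, 1:] - [:monom 1 (Suc p):]"

lemma ev_Mc: "ev (Mc p) y z = y ^ p - y - z ^ Suc p"
  by (simp add: Mc_def ev_def poly_monom)

lemma Mc_deg: "p \<ge> 2 \<Longrightarrow> degree (Mc p :: 'a::field poly poly) = p \<and> lead_coeff (Mc p :: 'a poly poly) = 1"
proof -
  assume p: "p \<ge> 2"
  have d1: "degree ([:0, 1:] + [:monom (1::'a) (Suc p):]) \<le> 1"
    by (simp add: degree_add_le)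
  have "Mc p = monom (1::'a poly) p - ([:0, 1:] + [:monom 1 (Suc p):])" by (simp add: Mc_def)
  moreover have "degree ([:0, 1:] + [:monom (1::'a) (Suc p):]) < degree (monom (1::'a poly) p)"
    using d1 p by (simp add: degree_monom_eq)
  ultimately have dg: "degree (Mc p :: 'a poly poly) = p"
    by (simp add: degree_diff_eq_left degree_monom_eq)
  moreover have "coeff (Mc p :: 'a poly poly) p = 1"
  proof -
    obtain m where "p = Suc (Suc m)" using p by (metis add_2_eq_Suc le_Suc_ex)
    then show ?thesis by (simp add: Mc_def)
  qed
  ultimately show ?thesis by simp
qed

lemma NS:
  assumes "prime p" "CHAR('a::field) = p" "alg_closed TYPE('a)"
    and van: "\<And>y z. y ^ p - y - z ^ Suc p = 0 \<Longrightarrow> ev G y z = 0"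
  shows "\<exists>k. PF k \<and> (\<forall>z::'a. ev G (-(z ^ Suc p)) z = z ^ (p * Suc p) * k z)"
proof -
  have p2: "p \<ge> 2" using assms(1) prime_ge_2_nat by blast
  obtain H R where qr: "pseudo_divmod G (Mc p) = (H, R)" by (cases "pseudo_divmod G (Mc p)") auto
  have Mnz: "Mc p \<noteq> (0 :: 'a poly poly)" using Mc_deg[OF p2] p2 by (metis degree_0 not_numeral_le_zero)
  have dM: "degree (Mc p :: 'a poly poly) = p" and lM: "lead_coeff (Mc p :: 'a poly poly) = 1"
    using Mc_deg[OF p2] by auto
  have GHR: "G = Mc p * H + R"
    using pseudo_divmod(1)[OF Mnz qr] unfolding lM by simp
  have Rd: "R = 0 \<or> degree R < p"
    using pseudo_divmod(2)[OF Mnz qr] unfolding dM .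
  have R0: "ev R y z = 0" for y z
  proof -
    define R0 where "R0 = map_poly (\<lambda>q. poly q z) R"
    obtain r where r: "r ^ p - r = z ^ Suc p" using root_exists[OF assms(3) p2] by blast
    have "poly R0 (r + of_nat k) = 0" if "k < p" for k
    proof -
      have rt: "(r + of_nat k) ^ p - (r + of_nat k) - z ^ Suc p = 0"
        using root_shift[OF assms(1,2) r] by simp
      have "ev G (r + of_nat k) z = 0" by (rule van[OF rt])
      moreover have "ev (Mc p) (r + of_nat k) z = 0" using rt by (simp add: ev_Mc)
      ultimately have "ev R (r + of_nat k) z = 0" using GHR
        by (metis add_0 ev_add ev_mult mult_zero_left)
      then show ?thesis by (simp add: R0_def ev_map_poly)
    qed
    moreover have "degree R0 < p"
      using Rd map_poly_degree_leq[of "\<lambda>q. poly q z" R] p2 unfolding R0_def by auto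
    ultimately have "R0 = 0" using many_roots_zero[OF _ _ assms(2)] by blast
    then show ?thesis using ev_map_poly[of z R y] by (simp add: R0_def)
  qed
  define Y :: "'a poly" where "Y = - monom 1 (Suc p)"
  have "ev G (-(z ^ Suc p)) z = z ^ (p * Suc p) * ((-1) ^ p * poly (poly H Y) z)" for z :: 'a
  proof -
    have "ev G (-(z ^ Suc p)) z = ev (Mc p) (-(z ^ Suc p)) z * ev H (-(z ^ Suc p)) z"
      using GHR R0 by (metis add_0_right ev_add ev_mult)
    also have "ev (Mc p) (-(z ^ Suc p)) z = (-1) ^ p * z ^ (p * Suc p)"
    proof -
      have "(-(z ^ Suc p)) ^ p = (-1) ^ p * (z ^ Suc p) ^ p" by (rule power_minus)
      also have "(z ^ Suc p) ^ p = z ^ (p * Suc p)" by (metis power_mult mult.commute)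
      finally show ?thesis by (simp add: ev_Mc)
    qed
    also have "ev H (-(z ^ Suc p)) z = poly (poly H Y) z"
      by (simp add: ev_poly_poly Y_def poly_monom)
    finally show ?thesis by (simp add: algebra_simps)
  qed
  moreover have "PF (\<lambda>z. (-1) ^ p * poly (poly H Y) z)" by (intro PF_mult PF_const PF_poly)
  ultimately show ?thesis by blast
qed

definition good :: "'a::field rep \<Rightarrow> bool" where
  "good r \<longleftrightarrow> (\<exists>d. hp d (fst r) \<and> hp d (snd r))"

definition cv :: "nat \<Rightarrow> 'a::field \<Rightarrow> 'a pt" where
  "cv p z = (1, -(z ^ Suc p), z)"

definition W :: "nat \<Rightarrow> nat \<Rightarrow> 'a::field rep \<Rightarrow> bool" where
  "W p n h \<longleftrightarrow> (\<exists>q. PF q \<and> (\<forall>z. fst h (cv p z) = z ^ n * q z))"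

lemma cv0[simp]: "cv p 0 = P0" by (simp add: cv_def P0_def)

lemma onC_P0: "p > 0 \<Longrightarrow> on_C p (P0 :: 'a::field pt)"
  by (simp add: on_C_def P0_def)

lemma onC_1: "on_C p (1, y, z) \<longleftrightarrow> y ^ p - y - z ^ Suc p = (0::'a::field)"
  by (simp add: on_C_def)

lemma local_good: "h \<in> local_ring p P0 \<Longrightarrow> good h \<and> snd h P0 \<noteq> 0"
  by (auto simp: local_ring_def ratfun_def good_def hp_iff_hpoly)

lemma good_local: "p > 0 \<Longrightarrow> good h \<Longrightarrow> snd h P0 \<noteq> 0 \<Longrightarrow> h \<in> local_ring p P0"
proof -
  assume p: "p > 0" and g: "good h" and s: "snd h P0 \<noteq> 0"
  obtain d where "hp d (fst h)" "hp d (snd h)" using g unfolding good_def by blast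
  moreover have "\<exists>v. on_C p v \<and> snd h v \<noteq> 0" using onC_P0[OF p] s by blast
  ultimately show ?thesis unfolding local_ring_def ratfun_def using s by (auto simp: hp_iff_hpoly)
qed

lemma good_PF: "hp d f \<Longrightarrow> PF (\<lambda>z. f (cv p z))"
proof -
  assume "hp d f"
  have "PF (\<lambda>z. -(z ^ Suc p))" by (intro PF_uminus PF_power PF_id)
  from hp_PF[OF \<open>hp d f\<close> PF_const this PF_id] show ?thesis unfolding cv_def .
qed

lemma good_PF_fst: "good h \<Longrightarrow> PF (\<lambda>z. fst h (cv p z))"
  unfolding good_def using good_PF by blast
lemma good_PF_snd: "good h \<Longrightarrow> PF (\<lambda>z. snd h (cv p z))"
  unfolding good_def using good_PF by blast

lemma good_rmul: "good r \<Longrightarrow> good s \<Longrightarrow> good (rmul r s)"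
  unfolding good_def rmul_def using hp_mult by fastforce

lemma good_radd: "good r \<Longrightarrow> good s \<Longrightarrow> good (radd r s)"
proof -
  assume "good r" "good s"
  then obtain d e where r: "hp d (fst r)" "hp d (snd r)" and s: "hp e (fst s)" "hp e (snd s)"
    unfolding good_def by blast
  have "hp (d + e) (\<lambda>v. fst r v * snd s v)" using hp_mult[OF r(1) s(2)] .
  moreover have "hp (d + e) (\<lambda>v. fst s v * snd r v)" using hp_mult[OF s(1) r(2)] by (simp add: add.commute)
  ultimately have "hp (d + e) (\<lambda>v. fst r v * snd s v + fst s v * snd r v)" by (rule hp.add)
  moreover have "hp (d + e) (\<lambda>v. snd r v * snd s v)" using hp_mult[OF r(2) s(2)] .
  ultimately show ?thesis unfolding good_def radd_def by auto
qed

lemma good_rsub: "good r \<Longrightarrow> good s \<Longrightarrow> good (rsub r s)"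
proof -
  assume "good r" "good s"
  then obtain d e where r: "hp d (fst r)" "hp d (snd r)" and s: "hp e (fst s)" "hp e (snd s)"
    unfolding good_def by blast
  have "hp (d + e) (\<lambda>v. fst r v * snd s v)" using hp_mult[OF r(1) s(2)] .
  moreover have "hp (d + e) (\<lambda>v. fst s v * snd r v)" using hp_mult[OF s(1) r(2)] by (simp add: add.commute)
  ultimately have "hp (d + e) (\<lambda>v. fst r v * snd s v - fst s v * snd r v)" by (rule hp_diff)
  moreover have "hp (d + e) (\<lambda>v. snd r v * snd s v)" using hp_mult[OF r(2) s(2)] .
  ultimately show ?thesis unfolding good_def rsub_def by auto
qed

lemma good_pull: "good r \<Longrightarrow> good (pull g r)"
  unfolding good_def pull_def using hp_comp_act by (fastforce simp: comp_def)

lemma good_rone: "good rone" unfolding good_def rone_def by (auto intro!: exI[of _ 0] hp_const)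
lemma good_rzero: "good rzero" unfolding good_def rzero_def by (auto intro!: exI[of _ 0] hp_const hp_zero)

lemma W_mono: "W p n h \<Longrightarrow> m \<le> n \<Longrightarrow> W p m h"
proof -
  assume "W p n h" "m \<le> n"
  then obtain q where q: "PF q" "\<forall>z. fst h (cv p z) = z ^ n * q z" unfolding W_def by blast
  have "fst h (cv p z) = z ^ m * (z ^ (n - m) * q z)" for z
    using q(2) \<open>m \<le> n\<close> by (simp add: mult.assoc power_add[symmetric])
  moreover have "PF (\<lambda>z. z ^ (n - m) * q z)" using q(1) by (intro PF_intros)
  ultimately show ?thesis unfolding W_def by blast
qed

lemma W_rmul: "W p m r \<Longrightarrow> W p n s \<Longrightarrow> W p (m + n) (rmul r s)"
proof -
  assume "W p m r" "W p n s"
  then obtain q q' where q: "PF q" "\<forall>z. fst r (cv p z) = z ^ m * q z"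
    and q': "PF q'" "\<forall>z. fst s (cv p z) = z ^ n * q' z" unfolding W_def by blast
  show ?thesis unfolding W_def rmul_def
    by (rule exI[of _ "\<lambda>z. q z * q' z"]) (use q q' in \<open>auto intro: PF_intros simp: power_add algebra_simps\<close>)
qed

lemma W_radd: "W p n r \<Longrightarrow> W p n s \<Longrightarrow> good r \<Longrightarrow> good s \<Longrightarrow> W p n (radd r s)"
proof -
  assume "W p n r" "W p n s" and g: "good r" "good s"
  then obtain q q' where q: "PF q" "\<forall>z. fst r (cv p z) = z ^ n * q z"
    and q': "PF q'" "\<forall>z. fst s (cv p z) = z ^ n * q' z" unfolding W_def by blast
  have "PF (\<lambda>z. q z * snd s (cv p z) + q' z * snd r (cv p z))"
    using q q' good_PF_snd[OF g(1)] good_PF_snd[OF g(2)] by (intro PF_intros) auto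
  then show ?thesis unfolding W_def radd_def
    by (rule exI[of _ "\<lambda>z. q z * snd s (cv p z) + q' z * snd r (cv p z)", OF conjI])
       (use q q' in \<open>auto simp: algebra_simps\<close>)
qed

lemma W_0: "good h \<Longrightarrow> W p 0 h"
  unfolding W_def using good_PF_fst by fastforce

lemma W_rzero: "W p n rzero"
  unfolding W_def rzero_def by (rule exI[of _ "\<lambda>z. 0"]) (auto intro: PF_intros)

lemma W_max: "h \<in> max_ideal p P0 \<Longrightarrow> W p 1 h"
proof -
  assume h: "h \<in> max_ideal p P0"
  then have g: "good h" and f0: "fst h P0 = 0"
    using local_good[of h p] by (auto simp: max_ideal_def)
  obtain e where e: "PF e" "\<forall>z. fst h (cv p z) = fst h (cv p 0) + z * e z"
    using PF_decomp[OF good_PF_fst[OF g, of p]] by blast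
  then show ?thesis unfolding W_def using f0 by (intro exI[of _ e]) auto
qed

lemma rprodn_props:
  "(\<forall>l<n. r l \<in> max_ideal p P0) \<Longrightarrow> good (rprodn r n) \<and> snd (rprodn r n) P0 \<noteq> 0 \<and> W p n (rprodn r n)"
proof (induction n)
  case 0
  have "W p 0 (rone :: 'a rep)" by (rule W_0[OF good_rone])
  then show ?case using good_rone[unfolded rone_def] by (auto simp: rone_def)
next
  case (Suc n)
  have m: "r n \<in> max_ideal p P0" using Suc.prems by auto
  then have "r n \<in> local_ring p P0" by (simp add: max_ideal_def)
  from local_good[OF this] have "good (r n)" "snd (r n) P0 \<noteq> 0" by auto
  moreover have "W p (n + 1) (rmul (rprodn r n) (r n))"
    using W_rmul[of p n "rprodn r n" 1 "r n"] Suc W_max[OF m] by auto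
  moreover have "good (rprodn r n)" using Suc by auto
  moreover have "good (rmul (rprodn r n) (r n))"
    by (rule good_rmul[OF \<open>good (rprodn r n)\<close> \<open>good (r n)\<close>])
  ultimately show ?case using Suc by (auto simp: rmul_def)
qed

lemma rsumn_props:
  "(\<forall>j<k. good (f j) \<and> snd (f j) P0 \<noteq> 0 \<and> W p n (f j)) \<Longrightarrow>
    good (rsumn f k) \<and> snd (rsumn f k) P0 \<noteq> 0 \<and> W p n (rsumn f k)"
proof (induction k)
  case 0
  then show ?case using good_rzero[unfolded rzero_def] W_rzero[unfolded rzero_def] by (auto simp: rzero_def)
next
  case (Suc k)
  then have a: "good (rsumn f k)" "snd (rsumn f k) P0 \<noteq> 0" "W p n (rsumn f k)"
    and b: "good (f k)" "snd (f k) P0 \<noteq> 0" "W p n (f k)" by auto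
  have "good (radd (rsumn f k) (f k))" using good_radd a b by blast
  moreover have "W p n (radd (rsumn f k) (f k))" using W_radd a b by blast
  moreover have "snd (radd (rsumn f k) (f k)) P0 \<noteq> 0" using a b by (simp add: radd_def)
  ultimately show ?case by simp
qed

lemma transfer:
  assumes "prime p" "CHAR('a::field) = p" "alg_closed TYPE('a)"
    and gh: "good (h :: 'a rep)" and gS: "good S" and S0: "snd S P0 \<noteq> 0"
    and fe: "feq p h S" and WS: "W p m S" and m: "m \<le> p * Suc p"
  shows "W p m h"
proof -
  have inf: "infinite (UNIV :: 'a set)" using alg_closed_infinite[OF assms(3)] .
  obtain d e where h: "hp d (fst h)" "hp d (snd h)" and s: "hp e (fst S)" "hp e (snd S)"
    using gh gS unfolding good_def by blast
  define F where "F = (\<lambda>v. fst h v * snd S v - fst S v * snd h v)"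
  have "hp (d + e) F" unfolding F_def
    using hp_diff[OF hp_mult[OF h(1) s(2)]] hp_mult[OF s(1) h(2)] by (simp add: add.commute)
  then obtain G where G: "\<And>y z. F (1, y, z) = ev G y z" using hp_ev by blast
  have "ev G y z = 0" if "y ^ p - y - z ^ Suc p = 0" for y z
  proof -
    have "on_C p (1, y, z)" using that by (simp add: onC_1)
    then have "F (1, y, z) = 0" using fe unfolding feq_def F_def by simp
    then show ?thesis using G by simp
  qed
  from NS[OF assms(1-3), of G, OF this] obtain k where k: "PF k" "\<forall>z. ev G (-(z ^ Suc p)) z = z ^ (p * Suc p) * k z"
    by blast
  obtain q where q: "PF q" "\<forall>z. fst S (cv p z) = z ^ m * q z" using WS unfolding W_def by blast
  define r where "r = (\<lambda>z. q z * snd h (cv p z) + z ^ (p * Suc p - m) * k z)"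
  have "fst h (cv p z) * snd S (cv p z) = z ^ m * r z" for z
  proof -
    have "fst h (cv p z) * snd S (cv p z) - fst S (cv p z) * snd h (cv p z) = z ^ (p * Suc p) * k z"
      using G[of "-(z ^ Suc p)" z] k(2) unfolding F_def cv_def by simp
    moreover have "z ^ (p * Suc p) = z ^ m * z ^ (p * Suc p - m)" using m by (simp add: power_add[symmetric])
    ultimately show ?thesis unfolding r_def using q(2) by (simp add: algebra_simps)
  qed
  moreover have "PF r" unfolding r_def using q(1) k(1) good_PF_snd[OF gh] by (intro PF_intros) auto
  ultimately obtain q' where "PF q'" "\<forall>z. fst h (cv p z) = z ^ m * q' z"
    using PF_D[OF inf good_PF_fst[OF gh] good_PF_snd[OF gS]] S0 by (metis cv0)
  then show ?thesis unfolding W_def by blast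
qed

lemma in_mpow_W:
  assumes "prime p" "CHAR('a::field) = p" "alg_closed TYPE('a)"
    and "in_mpow p P0 n (h :: 'a rep)"
  shows "W p (min n (p * Suc p)) h"
proof -
  from assms(4) obtain k s r where h: "h \<in> local_ring p P0"
    and sr: "\<forall>j<k. s j \<in> local_ring p P0 \<and> (\<forall>l<n. r j l \<in> max_ideal p P0)"
    and fe: "feq p h (rsumn (\<lambda>j. rmul (s j) (rprodn (r j) n)) k)"
    unfolding in_mpow_def by blast
  have "\<forall>j<k. good (rmul (s j) (rprodn (r j) n)) \<and> snd (rmul (s j) (rprodn (r j) n)) P0 \<noteq> 0
     \<and> W p n (rmul (s j) (rprodn (r j) n))"
  proof (intro allI impI)
    fix j assume j: "j < k"
    have "good (s j)" "snd (s j) P0 \<noteq> 0" using sr j local_good by blast+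
    moreover have "good (rprodn (r j) n) \<and> snd (rprodn (r j) n) P0 \<noteq> 0 \<and> W p n (rprodn (r j) n)"
      using sr j by (intro rprodn_props) auto
    ultimately show "good (rmul (s j) (rprodn (r j) n)) \<and> snd (rmul (s j) (rprodn (r j) n)) P0 \<noteq> 0
     \<and> W p n (rmul (s j) (rprodn (r j) n))"
      using good_rmul[of "s j" "rprodn (r j) n"] W_rmul[OF W_0[of "s j" p], of n "rprodn (r j) n"]
      by (simp add: rmul_def)
  qed
  from rsumn_props[OF this] have S: "good (rsumn (\<lambda>j. rmul (s j) (rprodn (r j) n)) k)"
    "snd (rsumn (\<lambda>j. rmul (s j) (rprodn (r j) n)) k) P0 \<noteq> 0"
    "W p n (rsumn (\<lambda>j. rmul (s j) (rprodn (r j) n)) k)" by auto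
  show ?thesis
    by (rule transfer[OF assms(1-3) _ S(1,2) fe W_mono[OF S(3)]]) (use local_good[OF h] in auto)
qed

lemma hp_S: "\<exists>S. hp (i - 1) S \<and> (i = 0 \<longrightarrow> (\<forall>v. S v = 0)) \<and> S P0 = of_nat i * b
   \<and> (\<forall>x y z. (x + b * y) ^ i - x ^ i = y * S (x, y, z :: 'a::field))"
proof (induction i)
  case 0
  then show ?case by (intro exI[of _ "\<lambda>v. 0"]) (auto intro: hp_zero)
next
  case (Suc i)
  then obtain S where S: "hp (i - 1) S" "i = 0 \<longrightarrow> (\<forall>v. S v = 0)" "S P0 = of_nat i * b"
    "\<forall>x y z. (x + b * y) ^ i - x ^ i = y * S (x, y, z :: 'a)" by blast
  define S' where "S' = (\<lambda>v::'a pt. (fst v + b * fst (snd v)) * S v + b * fst v ^ i)"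
  have "hp i S'"
  proof (cases "i = 0")
    case True
    then show ?thesis unfolding S'_def using S(2) by (auto intro: hp_cong[OF hp_const])
  next
    case False
    have l1: "hp 1 (\<lambda>v. fst v + b * fst (snd v))"
      using hp.add[OF hp_X hp_smult[OF hp_Y, of b]] by simp
    have "hp (1 + (i - 1)) (\<lambda>v. (fst v + b * fst (snd v)) * S v)" by (rule hp_mult[OF l1 S(1)])
    then have a: "hp i (\<lambda>v. (fst v + b * fst (snd v)) * S v)" using False by simp
    have "hp i (\<lambda>v. b * fst v ^ i * fst (snd v) ^ 0 * snd (snd v) ^ (i - i - 0))" by (rule hp.mono) auto
    then have "hp i (\<lambda>v. b * fst v ^ i)" by simp
    from hp.add[OF a this] show ?thesis unfolding S'_def .
  qed
  moreover have "S' P0 = of_nat (Suc i) * b" unfolding S'_def using S(3) by (simp add: P0_def algebra_simps)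
  moreover have "(x + b * y) ^ Suc i - x ^ Suc i = y * S' (x, y, z)" for x y z
  proof -
    have "(x + b * y) ^ Suc i - x ^ Suc i = (x + b * y) * ((x + b * y) ^ i - x ^ i) + b * y * x ^ i"
      by (simp add: algebra_simps)
    also have "\<dots> = (x + b * y) * (y * S (x, y, z)) + b * y * x ^ i"
      using S(4) by simp
    also have "\<dots> = y * S' (x, y, z)" unfolding S'_def by (simp add: algebra_simps)
    finally show ?thesis .
  qed
  ultimately show ?case by (intro exI[of _ S']) auto
qed

lemma hp_Q: "hp n f \<Longrightarrow> \<exists>Q. hp (n - 1) Q \<and> (n = 0 \<longrightarrow> (\<forall>v. Q v = 0)) \<and> Q P0 = of_nat n * b * f P0
   \<and> (\<forall>x y z. f (x + b * y, y, z) - f (x, y, z) = y * Q (x, y, z :: 'a::field))"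
proof (induction rule: hp.induct)
  case (mono i j d c)
  obtain S where S: "hp (i - 1) S" "i = 0 \<longrightarrow> (\<forall>v. S v = 0)" "S P0 = of_nat i * b"
    "\<forall>x y z. (x + b * y) ^ i - x ^ i = y * S (x, y, z :: 'a)" using hp_S by blast
  define Q where "Q = (\<lambda>v::'a pt. c * S v * fst (snd v) ^ j * snd (snd v) ^ (d - i - j))"
  have "hp (d - 1) Q"
  proof (cases "i = 0")
    case True
    then show ?thesis unfolding Q_def using S(2) by (auto intro: hp_zero')
  next
    case False
    have "hp ((i - 1) + j + (d - i - j)) (\<lambda>v. S v * fst (snd v) ^ j * snd (snd v) ^ (d - i - j))"
      by (intro hp_mult hp_power S(1) hp_Y hp_Z)
    moreover have "(i - 1) + j + (d - i - j) = d - 1" using False mono by simp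
    ultimately have "hp (d - 1) (\<lambda>v. S v * fst (snd v) ^ j * snd (snd v) ^ (d - i - j))" by simp
    from hp_smult[OF this, of c] show ?thesis unfolding Q_def by (simp add: mult.assoc)
  qed
  moreover have "d = 0 \<longrightarrow> (\<forall>v. Q v = 0)" using mono S(2) by (auto simp: Q_def)
  moreover have "Q P0 = of_nat d * b * (c * fst P0 ^ i * fst (snd P0) ^ j * snd (snd P0) ^ (d - i - j))"
  proof (cases "j = 0 \<and> d - i - j = 0")
    case True
    then have "i = d" using mono by simp
    then show ?thesis using True S(3) by (simp add: Q_def P0_def)
  next
    case False
    then show ?thesis by (auto simp: Q_def P0_def)
  qed
  moreover have "\<forall>x y z. c * (x + b * y) ^ i * y ^ j * z ^ (d - i - j) - c * x ^ i * y ^ j * z ^ (d - i - j)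
      = y * Q (x, y, z)"
  proof (intro allI)
    fix x y z :: 'a
    have "c * (x + b * y) ^ i * y ^ j * z ^ (d - i - j) - c * x ^ i * y ^ j * z ^ (d - i - j)
       = c * ((x + b * y) ^ i - x ^ i) * y ^ j * z ^ (d - i - j)" by (simp add: algebra_simps)
    also have "\<dots> = c * (y * S (x, y, z)) * y ^ j * z ^ (d - i - j)" using S(4) by simp
    also have "\<dots> = y * Q (x, y, z)" by (simp add: Q_def algebra_simps)
    finally show "c * (x + b * y) ^ i * y ^ j * z ^ (d - i - j) - c * x ^ i * y ^ j * z ^ (d - i - j)
      = y * Q (x, y, z)" .
  qed
  ultimately show ?case by (intro exI[of _ Q]) auto
next
  case (add d f g)
  then obtain Q1 Q2 where Q1: "hp (d - 1) Q1" "d = 0 \<longrightarrow> (\<forall>v. Q1 v = 0)" "Q1 P0 = of_nat d * b * f P0"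
     "\<forall>x y z. f (x + b * y, y, z) - f (x, y, z) = y * Q1 (x, y, z)"
    and Q2: "hp (d - 1) Q2" "d = 0 \<longrightarrow> (\<forall>v. Q2 v = 0)" "Q2 P0 = of_nat d * b * g P0"
     "\<forall>x y z. g (x + b * y, y, z) - g (x, y, z) = y * Q2 (x, y, z)" by blast
  show ?case
    by (rule exI[of _ "\<lambda>v. Q1 v + Q2 v"])
       (use Q1 Q2 hp.add[OF Q1(1) Q2(1)] in \<open>auto simp: algebra_simps\<close>)
qed

lemma hp_DEC: "hp n f \<Longrightarrow> \<exists>A1 A2 c1 c0. hp (n - 1) A1 \<and> (n = 0 \<longrightarrow> (\<forall>v. A1 v = 0))
   \<and> hp (n - 2) A2 \<and> (n < 2 \<longrightarrow> (\<forall>v. A2 v = 0)) \<and> (n = 0 \<longrightarrow> c1 = 0)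
   \<and> (\<forall>x y z. f (x, y, z) = y * A1 (x, y, z) + z ^ 2 * A2 (x, y, z) + c1 * x ^ (n - 1) * z + c0 * x ^ n)"
proof (induction rule: hp.induct)
  case (mono i j d c)
  define k where "k = d - i - j"
  show ?case
  proof (cases "j \<ge> 1")
    case True
    have "hp (d - 1) (\<lambda>v. c * fst v ^ i * fst (snd v) ^ (j - 1) * snd (snd v) ^ ((d - 1) - i - (j - 1)))"
      by (rule hp.mono) (use mono True in auto)
    moreover have "(d - 1) - i - (j - 1) = k" using mono True by (simp add: k_def)
    ultimately have h: "hp (d - 1) (\<lambda>v. c * fst v ^ i * fst (snd v) ^ (j - 1) * snd (snd v) ^ k)" by simp
    have id: "c * x ^ i * y ^ j * z ^ (d - i - j) = y * (c * x ^ i * y ^ (j - 1) * z ^ k)" for x y z :: 'a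
    proof -
      have "y ^ j = y * y ^ (j - 1)" using True by (metis One_nat_def Suc_pred' less_le_trans power_Suc zero_less_one)
      then show ?thesis by (simp add: k_def)
    qed
    have d0: "d \<noteq> 0" using True mono by auto
    show ?thesis
      apply (rule exI[of _ "\<lambda>v. c * fst v ^ i * fst (snd v) ^ (j - 1) * snd (snd v) ^ k"])
      apply (rule exI[of _ "\<lambda>v. 0"], rule exI[of _ 0], rule exI[of _ 0])
      using h d0 id by (auto intro: hp_zero)
  next
    case False
    then have j0: "j = 0" by simp
    consider "k \<ge> 2" | "k = 1" | "k = 0" by linarith
    then show ?thesis
    proof cases
      case 1
      have "hp (d - 2) (\<lambda>v. c * fst v ^ i * fst (snd v) ^ 0 * snd (snd v) ^ ((d - 2) - i - 0))"
        by (rule hp.mono) (use mono 1 j0 in \<open>auto simp: k_def\<close>)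
      moreover have "(d - 2) - i - 0 = k - 2" using mono 1 j0 by (simp add: k_def)
      ultimately have h: "hp (d - 2) (\<lambda>v. c * fst v ^ i * snd (snd v) ^ (k - 2))" by simp
      have kk: "z ^ k = z ^ 2 * z ^ (k - 2)" for z :: 'a using 1 by (metis le_add_diff_inverse power_add)
      have "d \<ge> 2" using 1 by (simp add: k_def)
      have id: "c * x ^ i * y ^ j * z ^ (d - i - j) = z ^ 2 * (c * x ^ i * z ^ (k - 2))" for x y z :: 'a
        using kk[of z] j0 by (simp add: k_def)
      show ?thesis
        apply (rule exI[of _ "\<lambda>v. 0"])
        apply (rule exI[of _ "\<lambda>v. c * fst v ^ i * snd (snd v) ^ (k - 2)"], rule exI[of _ 0], rule exI[of _ 0])
        using h kk \<open>d \<ge> 2\<close> id by (auto intro: hp_zero)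
    next
      case 2
      then have "i = d - 1" "d \<ge> 1" using mono j0 by (auto simp: k_def)
      then show ?thesis
        apply -
        apply (rule exI[of _ "\<lambda>v. 0"], rule exI[of _ "\<lambda>v. 0"], rule exI[of _ c], rule exI[of _ 0])
        using 2 j0 by (auto intro: hp_zero simp: k_def[symmetric])
    next
      case 3
      then have "i = d" using mono j0 by (auto simp: k_def)
      then show ?thesis
        apply -
        apply (rule exI[of _ "\<lambda>v. 0"], rule exI[of _ "\<lambda>v. 0"], rule exI[of _ 0], rule exI[of _ c])
        using 3 j0 by (auto intro: hp_zero simp: k_def[symmetric])
    qed
  qed
next
  case (add d f g)
  then obtain A1 A2 c1 c0 B1 B2 e1 e0 where
    A: "hp (d - 1) A1" "d = 0 \<longrightarrow> (\<forall>v. A1 v = 0)" "hp (d - 2) A2" "d < 2 \<longrightarrow> (\<forall>v. A2 v = 0)" "d = 0 \<longrightarrow> c1 = 0"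
      "\<forall>x y z. f (x, y, z) = y * A1 (x, y, z) + z ^ 2 * A2 (x, y, z) + c1 * x ^ (d - 1) * z + c0 * x ^ d"
    and B: "hp (d - 1) B1" "d = 0 \<longrightarrow> (\<forall>v. B1 v = 0)" "hp (d - 2) B2" "d < 2 \<longrightarrow> (\<forall>v. B2 v = 0)" "d = 0 \<longrightarrow> e1 = 0"
      "\<forall>x y z. g (x, y, z) = y * B1 (x, y, z) + z ^ 2 * B2 (x, y, z) + e1 * x ^ (d - 1) * z + e0 * x ^ d"
    by metis
  show ?case
    apply (rule exI[of _ "\<lambda>v. A1 v + B1 v"], rule exI[of _ "\<lambda>v. A2 v + B2 v"], rule exI[of _ "c1 + e1"], rule exI[of _ "c0 + e0"])
    using A B hp.add[OF A(1) B(1)] hp.add[OF A(3) B(3)] by (auto simp: algebra_simps)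
qed

lemma rprodn_fst: "fst (rprodn r n) v = (\<Prod>l<n. fst (r l) v)"
  by (induction n) (auto simp: rone_def rmul_def)
lemma rprodn_snd: "snd (rprodn r n) v = (\<Prod>l<n. snd (r l) v)"
  by (induction n) (auto simp: rone_def rmul_def)

lemma in_mpow_single:
  assumes "h \<in> local_ring p P0" "s \<in> local_ring p P0" "\<forall>l<n. r l \<in> max_ideal p P0"
    and "\<And>v. on_C p v \<Longrightarrow> fst h v * (snd s v * (\<Prod>l<n. snd (r l) v)) = (fst s v * (\<Prod>l<n. fst (r l) v)) * snd h v"
  shows "in_mpow p P0 n h"
  unfolding in_mpow_def
proof (intro conjI exI)
  show "h \<in> local_ring p P0" by fact
  show "\<forall>j<1. s \<in> local_ring p P0 \<and> (\<forall>l<n. r l \<in> max_ideal p P0)" using assms by auto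
  show "feq p h (rsumn (\<lambda>j. rmul s (rprodn r n)) 1)"
    unfolding feq_def using assms(4)
    by (simp add: rzero_def radd_def rmul_def rprodn_fst rprodn_snd)
qed

lemma ZX_max: "p > 0 \<Longrightarrow> ((\<lambda>v. snd (snd v)), (\<lambda>v. fst v)) \<in> max_ideal p (P0 :: 'a::field pt)"
  unfolding max_ideal_def using good_local[of p "((\<lambda>v. snd (snd v)), (\<lambda>v. fst v))"] hp_X hp_Z
  by (auto simp: good_def P0_def)

definition Wc :: "nat \<Rightarrow> 'a::field pt \<Rightarrow> 'a" where
  "Wc p v = fst (snd v) ^ (p - 1) - fst v ^ (p - 1)"

lemma hp_Wc: "p \<ge> 1 \<Longrightarrow> hp (p - 1) (Wc p)"
  unfolding Wc_def by (intro hp_diff hp_power hp_X hp_Y)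

lemma Wc_P0: "p \<ge> 2 \<Longrightarrow> Wc p P0 = -1"
  by (simp add: Wc_def P0_def)

lemma curve_eq: "p \<ge> 1 \<Longrightarrow> on_C p v \<Longrightarrow> snd (snd v) ^ Suc p = fst v * fst (snd v) * Wc p v"
proof -
  assume p: "p \<ge> 1" and "on_C p v"
  obtain x y z where v: "v = (x, y, z)" by (cases v) auto
  have e: "x * y ^ p - x ^ p * y - z ^ (p + 1) = 0" using \<open>on_C p v\<close> by (simp add: on_C_def v)
  have "y ^ p = y * y ^ (p - 1)" "x ^ p = x * x ^ (p - 1)" using p
    by (metis Suc_diff_le diff_Suc_1 power_Suc)+
  then show ?thesis using e by (simp add: v Wc_def algebra_simps)
qed

lemma stab_Bor: "stab (P0 :: 'a::field pt) = Bor"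
proof -
  have "proj_eq P0 (act g P0) \<longleftrightarrow> (case g of (a, b, c, d) \<Rightarrow> a \<noteq> 0 \<and> c = (0::'a))" for g :: "'a mat2"
    by (cases g) (auto simp: proj_eq_def P0_def act_def)
  then show ?thesis unfolding stab_def Bor_def SL2_def by auto
qed

lemma ring_id1:
  fixes x y z a1 a2 b w e :: "'a::field"
  assumes "z * z * e = x * y * w"
  shows "(y * a1 + z ^ 2 * a2) * (b * w * (x * x)) = ((x * a1 * e + x ^ 2 * a2 * w) * (z * z)) * b"
proof -
  have "((x * a1 * e + x ^ 2 * a2 * w) * (z * z)) * b = x * a1 * b * (z * z * e) + x ^ 2 * a2 * w * z ^ 2 * b"
    by (simp add: algebra_simps power2_eq_square)
  also have "\<dots> = x * a1 * b * (x * y * w) + x ^ 2 * a2 * w * z ^ 2 * b" by (simp only: assms)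
  also have "\<dots> = (y * a1 + z ^ 2 * a2) * (b * w * (x * x))" by (simp add: algebra_simps power2_eq_square)
  finally show ?thesis by (rule sym)
qed

lemma LP:
  assumes p2: "p \<ge> 2" and lp: "local_param p P0 (t :: 'a::field rep)"
  shows "\<exists>m A1 A2 c1. hp m (fst t) \<and> hp m (snd t) \<and> m \<ge> 1 \<and> fst t P0 = 0 \<and> snd t P0 \<noteq> 0
     \<and> hp (m - 1) A1 \<and> hp (m - 2) A2 \<and> (m < 2 \<longrightarrow> (\<forall>v. A2 v = 0)) \<and> c1 \<noteq> 0
     \<and> (\<forall>x y z. fst t (x, y, z) = y * A1 (x, y, z) + z ^ 2 * A2 (x, y, z) + c1 * x ^ (m - 1) * z)"
proof -
  have p0: "p > 0" using p2 by simp
  have tm: "t \<in> max_ideal p P0" and nm2: "\<not> in_mpow p P0 2 t" using lp by (auto simp: local_param_def)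
  then have tl: "t \<in> local_ring p P0" and A0: "fst t P0 = 0" by (auto simp: max_ideal_def)
  from local_good[OF tl] obtain m where hA: "hp m (fst t)" and hB: "hp m (snd t)" and B0: "snd t P0 \<noteq> 0"
    unfolding good_def by blast
  from hp_DEC[OF hA] obtain A1 A2 c1 c0 where D: "hp (m - 1) A1" "m = 0 \<longrightarrow> (\<forall>v. A1 v = 0)"
    "hp (m - 2) A2" "m < 2 \<longrightarrow> (\<forall>v. A2 v = 0)" "m = 0 \<longrightarrow> c1 = 0"
    "\<forall>x y z. fst t (x, y, z) = y * A1 (x, y, z) + z ^ 2 * A2 (x, y, z) + c1 * x ^ (m - 1) * z + c0 * x ^ m"
    by blast
  have "c0 = 0" using D(6)[rule_format, of 1 0 0] A0 by (simp add: P0_def)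
  then have D6: "\<forall>x y z. fst t (x, y, z) = y * A1 (x, y, z) + z ^ 2 * A2 (x, y, z) + c1 * x ^ (m - 1) * z"
    using D(6) by simp
  have c1: "c1 \<noteq> 0"
  proof
    assume c10: "c1 = 0"
    define s where "s = ((\<lambda>v. fst v * A1 v * snd (snd v) ^ (p - 1) + fst v ^ 2 * A2 v * Wc p v),
                         (\<lambda>v. snd t v * Wc p v))"
    have h1: "hp (m + (p - 1)) (\<lambda>v. fst v * A1 v * snd (snd v) ^ (p - 1))"
    proof (cases "m = 0")
      case True then show ?thesis using D(2) by (auto intro: hp_zero')
    next
      case False
      have "hp (1 + (m - 1) + (p - 1)) (\<lambda>v. fst v * A1 v * snd (snd v) ^ (p - 1))"
        by (intro hp_mult hp_power hp_X hp_Z D(1))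
      then show ?thesis using False by simp
    qed
    have h2: "hp (m + (p - 1)) (\<lambda>v. fst v ^ 2 * A2 v * Wc p v)"
    proof (cases "m < 2")
      case True then show ?thesis using D(4) by (auto intro: hp_zero')
    next
      case False
      have "hp (2 + (m - 2) + (p - 1)) (\<lambda>v. fst v ^ 2 * A2 v * Wc p v)"
        using p2 by (intro hp_mult hp_power hp_X hp_Wc D(3)) auto
      moreover have "2 + (m - 2) + (p - 1) = m + (p - 1)" using False by simp
      ultimately show ?thesis by metis
    qed
    have gs: "good s" unfolding good_def s_def using hp.add[OF h1 h2] hp_mult[OF hB hp_Wc] p2 by auto
    have s0: "snd s P0 \<noteq> 0" using B0 Wc_P0[OF p2, where 'a='a] by (simp add: s_def)
    have feqf: "fst t v * (snd s v * (\<Prod>l<(2::nat). fst v)) = (fst s v * (\<Prod>l<(2::nat). snd (snd v))) * snd t v"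
      if C: "on_C p v" for v
    proof -
      obtain x y z where v: "v = (x, y, z)" by (cases v) auto
      have ce: "z ^ Suc p = x * y * Wc p v" using curve_eq[OF _ C] p2 by (simp add: v)
      have e1: "Suc p = Suc (Suc (p - 1))" using p2 by simp
      have key: "z * z * z ^ (p - 1) = x * y * Wc p v" using ce unfolding e1 power_Suc by (simp only: mult.assoc)
      have "fst t v * (snd s v * (x * x)) = (fst s v * (z * z)) * snd t v"
        using ring_id1[OF key, of "A1 v" "A2 v" "snd t v"] D6 c10 unfolding s_def by (simp add: v)
      then show ?thesis by (simp add: v numeral_2_eq_2)
    qed
    have mx: "\<forall>l<(2::nat). ((\<lambda>v. snd (snd v)), (\<lambda>v. fst v)) \<in> max_ideal p (P0 :: 'a pt)"
      using ZX_max[OF p0] by auto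
    have "in_mpow p P0 2 t"
      by (rule in_mpow_single[OF tl good_local[OF p0 gs s0], where r = "\<lambda>l. ((\<lambda>v. snd (snd v)), (\<lambda>v. fst v))"])
         (use mx feqf in simp_all)
    then show False using nm2 by simp
  qed
  have "m \<ge> 1" using c1 D(5) by (cases m) auto
  then show ?thesis using hA hB A0 B0 D(1,3,4) c1 D6 by blast
qed

lemma act_P0: "act (a, b, 0, d) (P0 :: 'a::field pt) = (a * 1, a * 0, a * 0)"
  by (simp add: act_def P0_def)

lemma h_max:
  assumes p0: "p > 0" and gt: "good (t :: 'a::field rep)" and A0: "fst t P0 = 0" and B0: "snd t P0 \<noteq> 0"
    and a0: "a \<noteq> 0"
  shows "rsub (pull (a, b, 0, d) t) t \<in> max_ideal p P0"
proof -
  obtain m where hA: "hp m (fst t)" and hB: "hp m (snd t)" using gt unfolding good_def by blast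
  have g: "good (rsub (pull (a, b, 0, d) t) t)" by (intro good_rsub good_pull gt)
  have Bg: "snd t (act (a, b, 0, d) P0) = a ^ m * snd t P0"
    unfolding act_P0 hp_homog[OF hB] by (simp add: P0_def)
  have Ag: "fst t (act (a, b, 0, d) P0) = a ^ m * fst t P0"
    unfolding act_P0 hp_homog[OF hA] by (simp add: P0_def)
  have s0: "snd (rsub (pull (a, b, 0, d) t) t) P0 \<noteq> 0"
    using Bg B0 a0 by (simp add: rsub_def pull_def)
  have f0: "fst (rsub (pull (a, b, 0, d) t) t) P0 = 0"
    using Ag A0 by (simp add: rsub_def pull_def)
  show ?thesis unfolding max_ideal_def using good_local[OF p0 g s0] f0 by simp
qed

lemma rone_local: "p > 0 \<Longrightarrow> rone \<in> local_ring p (P0 :: 'a::field pt)"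
  using good_local[OF _ good_rone] by (simp add: rone_def)

lemma P1:
  assumes "p > 0" "h \<in> max_ideal p (P0 :: 'a::field pt)"
  shows "in_mpow p P0 1 h"
proof -
  have "h \<in> local_ring p P0" using assms(2) by (simp add: max_ideal_def)
  show ?thesis
    by (rule in_mpow_single[OF \<open>h \<in> local_ring p P0\<close> rone_local[OF assms(1)], where r = "\<lambda>l. h"])
       (use assms(2) in \<open>auto simp: rone_def\<close>)
qed

lemma prod_if0: "(\<Prod>l<Suc k. F (if l = 0 then a else c)) = F a * F c ^ k"
  by (induction k) (auto simp: mult.commute mult.left_commute)

lemma ring_id2:
  fixes x y w nn b1 b2 X1 X2 Z1 Z2 xp :: "'a::field"
  assumes "X1 * X2 = x * xp" "Z1 * Z2 = x * y * w"
  shows "y * nn * (X1 * (w * b1 * b2 * X2)) = (Z1 * (xp * nn * Z2)) * (b1 * b2)"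
proof -
  have "y * nn * (X1 * (w * b1 * b2 * X2)) = y * nn * w * b1 * b2 * (X1 * X2)" by (simp add: algebra_simps)
  also have "\<dots> = y * nn * w * b1 * b2 * (x * xp)" by (simp only: assms)
  also have "\<dots> = xp * nn * b1 * b2 * (x * y * w)" by (simp add: algebra_simps)
  also have "\<dots> = xp * nn * b1 * b2 * (Z1 * Z2)" by (simp only: assms)
  also have "\<dots> = (Z1 * (xp * nn * Z2)) * (b1 * b2)" by (simp add: algebra_simps)
  finally show ?thesis .
qed

lemma P2:
  assumes p2: "p \<ge> 2" and hA: "hp m (fst (t :: 'a::field rep))" and hB: "hp m (snd t)" and m1: "m \<ge> 1"
    and A0: "fst t P0 = 0" and B0: "snd t P0 \<noteq> 0" and n1: "n \<ge> 1" and n2: "n \<le> p + 2"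
  shows "in_mpow p P0 n (rsub (pull (1, b, 0, 1) t) t)"
proof -
  have p0: "p > 0" using p2 by simp
  let ?h = "rsub (pull (1, b, 0, 1) t) t"
  have gt: "good t" using hA hB unfolding good_def by blast
  have hl: "?h \<in> local_ring p P0" using h_max[OF p0 gt A0 B0, of 1 b 1] by (simp add: max_ideal_def)
  obtain QA where QA: "hp (m - 1) QA" "QA P0 = of_nat m * b * fst t P0"
    "\<forall>x y z. fst t (x + b * y, y, z) - fst t (x, y, z) = y * QA (x, y, z)"
    using hp_Q[OF hA, of b] by blast
  obtain QB where QB: "hp (m - 1) QB" "QB P0 = of_nat m * b * snd t P0"
    "\<forall>x y z. snd t (x + b * y, y, z) - snd t (x, y, z) = y * QB (x, y, z)"
    using hp_Q[OF hB, of b] by blast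
  define N where "N = (\<lambda>v. QA v * snd t v - fst t v * QB v)"
  have hN: "hp ((m - 1) + m) N" unfolding N_def
    using hp_diff[OF hp_mult[OF QA(1) hB]] hp_mult[OF hA QB(1)] by (simp add: add.commute)
  define cc where "cc = ((\<lambda>v. fst v ^ p * N v), (\<lambda>v. Wc p v * snd t (act (1, b, 0, 1) v) * snd t v))"
  have "hp (p + ((m - 1) + m)) (fst cc)" unfolding cc_def using hp_mult[OF hp_power[OF hp_X] hN] by simp
  moreover have "hp ((p - 1) + m + m) (snd cc)" unfolding cc_def
    using hp_mult[OF hp_mult[OF hp_Wc hp_comp_act[OF hB]] hB] p2 by simp
  moreover have "p + ((m - 1) + m) = (p - 1) + m + m" using p2 m1 by simp
  ultimately have gc: "good cc" unfolding good_def by metis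
  have aP: "act (1, b, 0, 1) P0 = (P0 :: 'a pt)" by (simp add: act_def P0_def)
  have c0: "snd cc P0 \<noteq> 0" using B0 Wc_P0[OF p2, where 'a='a] by (simp add: cc_def aP)
  have c1: "fst cc P0 = 0" using A0 QA(2) by (simp add: cc_def N_def P0_def)
  have ccm: "cc \<in> max_ideal p P0" unfolding max_ideal_def using good_local[OF p0 gc c0] c1 by simp
  define s where "s = ((\<lambda>v::'a pt. snd (snd v) ^ (p + 2 - n)), (\<lambda>v::'a pt. fst v ^ (p + 2 - n)))"
  have gs: "good s" unfolding good_def s_def
    using hp_power[OF hp_Z, of "p + 2 - n"] hp_power[OF hp_X, of "p + 2 - n"] by auto
  have sl: "s \<in> local_ring p P0" by (rule good_local[OF p0 gs]) (simp add: s_def P0_def)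
  define r where "r = (\<lambda>l::nat. if l = 0 then cc else ((\<lambda>v::'a pt. snd (snd v)), (\<lambda>v::'a pt. fst v)))"
  have rm: "\<forall>l<n. r l \<in> max_ideal p P0" using ccm ZX_max[OF p0, where 'a='a] by (auto simp: r_def)
  obtain k where nk: "n = Suc k" using n1 by (cases n) auto
  show ?thesis
  proof (rule in_mpow_single[OF hl sl rm])
    fix v :: "'a pt" assume C: "on_C p v"
    obtain x y z where v: "v = (x, y, z)" by (cases v) auto
    have fh: "fst ?h v = y * N v"
    proof -
      have "fst ?h v = fst t (x + b * y, y, z) * snd t v - fst t v * snd t (x + b * y, y, z)"
        by (simp add: rsub_def pull_def act_def v)
      also have "\<dots> = (fst t v + y * QA v) * snd t v - fst t v * (snd t v + y * QB v)"
        using QA(3)[rule_format, of x y z] QB(3)[rule_format, of x y z] by (simp add: v algebra_simps)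
      also have "\<dots> = y * N v" by (simp add: N_def algebra_simps)
      finally show ?thesis .
    qed
    have sh: "snd ?h v = snd t (act (1, b, 0, 1) v) * snd t v" by (simp add: rsub_def pull_def)
    have ps: "(\<Prod>l<n. snd (r l) v) = snd cc v * x ^ k"
      unfolding nk r_def using prod_if0[where F="\<lambda>q. snd q v" and k=k and a=cc] by (simp add: v)
    have pf: "(\<Prod>l<n. fst (r l) v) = fst cc v * z ^ k"
      unfolding nk r_def using prod_if0[where F="\<lambda>q. fst q v" and k=k and a=cc] by (simp add: v)
    have X12: "x ^ (p + 2 - n) * x ^ k = x * x ^ p"
      using n2 nk by (simp flip: power_add power_Suc)
    have Z12: "z ^ (p + 2 - n) * z ^ k = x * y * Wc p v"
    proof -
      have "z ^ (p + 2 - n) * z ^ k = z ^ Suc p" using n2 nk by (simp flip: power_add)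
      then show ?thesis using curve_eq[OF _ C] p2 by (simp add: v)
    qed
    show "fst ?h v * (snd s v * (\<Prod>l<n. snd (r l) v)) = (fst s v * (\<Prod>l<n. fst (r l) v)) * snd ?h v"
      unfolding fh sh ps pf
      using ring_id2[OF X12 Z12, of "N v" "snd t (act (1, b, 0, 1) v)" "snd t v"]
      by (simp add: s_def cc_def v mult.assoc)
  qed
qed

lemma ring_a:
  fixes Ag Av Bv Bg y0 z A1g A2g P A1 A2 c1 d :: "'a::field"
  assumes "Ag = d * y0 * A1g + z ^ 2 * A2g + c1 * P * z" "Av = y0 * A1 + z ^ 2 * A2 + c1 * z"
    "y0 = -(z * z ^ p)"
  shows "Ag * Bv - Av * Bg = z * ((d * (-(z ^ p)) * A1g + z * A2g + c1 * P) * Bv - (-(z ^ p) * A1 + z * A2 + c1) * Bg)"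
  unfolding assms by (simp add: algebra_simps power2_eq_square)

lemma ring_b:
  fixes Ag Av Bv Bg y0 z A1g A2g P A1 A2 c1 Q1 Q2 S QB :: "'a::field"
  assumes "Ag = y0 * A1g + z ^ 2 * A2g + c1 * P * z" "A1g = A1 + y0 * Q1" "A2g = A2 + y0 * Q2"
    "P = 1 + y0 * S" "Av = y0 * A1 + z ^ 2 * A2 + c1 * z" "Bg = Bv + y0 * QB" "y0 = -(z * z ^ p)"
  shows "Ag * Bv - Av * Bg = z ^ Suc (Suc p) * (-((-(z ^ p) * Q1 + z * Q2 + c1 * S) * Bv - (-(z ^ p) * A1 + z * A2 + c1) * QB))"
  unfolding assms by (simp add: algebra_simps power2_eq_square)

lemma PF_comp: "hp k f \<Longrightarrow> PF (\<lambda>z. f (act g (cv p z)))"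
  using good_PF[OF hp_comp_act[of k f g]] by simp

lemma caseA:
  assumes pr: "prime p" "CHAR('a::field) = p" "alg_closed TYPE('a)" and p2: "p \<ge> 2"
    and hA: "hp m (fst (t :: 'a rep))" and hB: "hp m (snd t)" and m1: "m \<ge> 1"
    and A0: "fst t P0 = 0" and B0: "snd t P0 \<noteq> 0"
    and hA1: "hp (m - 1) A1" and hA2: "hp (m - 2) A2" and c1: "c1 \<noteq> 0"
    and DEC: "\<forall>x y z. fst t (x, y, z) = y * A1 (x, y, z) + z ^ 2 * A2 (x, y, z) + c1 * x ^ (m - 1) * z"
    and a0: "a \<noteq> 0" and a1: "a \<noteq> 1" and n2: "n \<ge> 2"
  shows "\<not> in_mpow p P0 n (rsub (pull (a, b, 0, d) t) t)"
proof
  assume im: "in_mpow p P0 n (rsub (pull (a, b, 0, d) t) t)"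
  let ?h = "rsub (pull (a, b, 0, d) t) t"
  have inf: "infinite (UNIV :: 'a set)" using alg_closed_infinite[OF pr(3)] .
  have "min n (p * Suc p) \<ge> 2" using n2 p2 by (simp add: le_trans[OF _ mult_le_mono[of 1 p 2 "Suc p"]])
  then have "W p (Suc 1) ?h" using W_mono[OF in_mpow_W[OF pr im]] by (simp add: numeral_2_eq_2)
  then obtain q where q: "PF q" "\<forall>z. fst ?h (cv p z) = z ^ Suc 1 * q z" unfolding W_def by blast
  define G where "G = (\<lambda>z. act (a, b, 0, d) (cv p z))"
  have Gz: "G z = (a + b * (-(z ^ Suc p)), d * (-(z ^ Suc p)), z)" for z
    by (simp add: G_def act_def cv_def)
  define \<psi>1 where "\<psi>1 = (\<lambda>z. d * (-(z ^ p)) * A1 (G z) + z * A2 (G z) + c1 * (a + b * (-(z ^ Suc p))) ^ (m - 1))"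
  define \<psi>2 where "\<psi>2 = (\<lambda>z. -(z ^ p) * A1 (cv p z) + z * A2 (cv p z) + c1)"
  define \<psi> where "\<psi> = (\<lambda>z. \<psi>1 z * snd t (cv p z) - \<psi>2 z * snd t (G z))"
  have eq: "fst ?h (cv p z) = z * \<psi> z" for z
  proof -
    have "fst ?h (cv p z) = fst t (G z) * snd t (cv p z) - fst t (cv p z) * snd t (G z)"
      by (simp add: rsub_def pull_def G_def)
    also have "\<dots> = z * \<psi> z" unfolding \<psi>_def \<psi>1_def \<psi>2_def
    proof (rule ring_a)
      show "fst t (G z) = d * (-(z ^ Suc p)) * A1 (G z) + z ^ 2 * A2 (G z) + c1 * (a + b * (-(z ^ Suc p))) ^ (m - 1) * z"
        using DEC unfolding Gz by simp
      show "fst t (cv p z) = (-(z ^ Suc p)) * A1 (cv p z) + z ^ 2 * A2 (cv p z) + c1 * z"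
        using DEC unfolding cv_def by simp
      show "-(z ^ Suc p) = -(z * z ^ p)" by simp
    qed
    finally show ?thesis .
  qed
  have PFpsi: "PF \<psi>" unfolding \<psi>_def \<psi>1_def \<psi>2_def G_def
    by (intro PF_intros PF_comp[OF hA1] PF_comp[OF hA2] PF_comp[OF hB] good_PF[OF hA1] good_PF[OF hA2] good_PF[OF hB])
  have "z ^ 1 * \<psi> z = z ^ Suc 1 * q z" for z
  proof -
    have "z ^ 1 * \<psi> z = fst ?h (cv p z)" using eq[of z] by simp
    also have "\<dots> = z ^ Suc 1 * q z" using q(2) by blast
    finally show ?thesis .
  qed
  from PF_L[OF inf PFpsi q(1) this] have psi0: "\<psi> 0 = 0" .
  have G0: "G 0 = (a * 1, a * 0, a * 0)" using Gz[of 0] by simp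
  have BG0: "snd t (G 0) = a ^ m * snd t P0" unfolding G0 hp_homog[OF hB] by (simp add: P0_def)
  have "\<psi> 0 = c1 * a ^ (m - 1) * snd t P0 - c1 * (a ^ m * snd t P0)"
    using p2 unfolding \<psi>_def \<psi>1_def \<psi>2_def BG0 by (simp add: G0 zero_power)
  also have "\<dots> = c1 * a ^ (m - 1) * snd t P0 * (1 - a)"
  proof -
    have "a ^ m = a ^ (m - 1) * a" using m1 by (metis Suc_diff_le diff_Suc_1 power_Suc2)
    then show ?thesis by (simp add: algebra_simps)
  qed
  finally have "\<psi> 0 = c1 * a ^ (m - 1) * snd t P0 * (1 - a)" .
  moreover have "c1 * a ^ (m - 1) * snd t P0 * (1 - a) \<noteq> 0" using c1 a0 B0 a1 by simp
  ultimately show False using psi0 by simp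
qed

lemma caseB:
  assumes pr: "prime p" "CHAR('a::field) = p" "alg_closed TYPE('a)" and p2: "p \<ge> 2"
    and hA: "hp m (fst (t :: 'a rep))" and hB: "hp m (snd t)" and m1: "m \<ge> 1"
    and A0: "fst t P0 = 0" and B0: "snd t P0 \<noteq> 0"
    and hA1: "hp (m - 1) A1" and hA2: "hp (m - 2) A2" and c1: "c1 \<noteq> 0"
    and DEC: "\<forall>x y z. fst t (x, y, z) = y * A1 (x, y, z) + z ^ 2 * A2 (x, y, z) + c1 * x ^ (m - 1) * z"
    and b0: "b \<noteq> 0" and n3: "n \<ge> p + 3"
  shows "\<not> in_mpow p P0 n (rsub (pull (1, b, 0, 1) t) t)"
proof
  assume im: "in_mpow p P0 n (rsub (pull (1, b, 0, 1) t) t)"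
  let ?h = "rsub (pull (1, b, 0, 1) t) t"
  have inf: "infinite (UNIV :: 'a set)" using alg_closed_infinite[OF pr(3)] .
  have "p * Suc p \<ge> p + 3"
  proof -
    have "p * Suc p = p * p + p" by simp
    moreover have "p * p \<ge> 2 * 2" using p2 by (intro mult_le_mono) auto
    ultimately show ?thesis by simp
  qed
  then have "min n (p * Suc p) \<ge> Suc (Suc (Suc p))" using n3 by simp
  then have "W p (Suc (Suc (Suc p))) ?h" using W_mono[OF in_mpow_W[OF pr im]] by blast
  then obtain q where q: "PF q" "\<forall>z. fst ?h (cv p z) = z ^ Suc (Suc (Suc p)) * q z" unfolding W_def by blast
  obtain Q1 where Q1: "hp (m - 1 - 1) Q1" "\<forall>x y z. A1 (x + b * y, y, z) - A1 (x, y, z) = y * Q1 (x, y, z)"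
    using hp_Q[OF hA1, of b] by blast
  obtain Q2 where Q2: "hp (m - 2 - 1) Q2" "\<forall>x y z. A2 (x + b * y, y, z) - A2 (x, y, z) = y * Q2 (x, y, z)"
    using hp_Q[OF hA2, of b] by blast
  obtain S where S: "hp (m - 1 - 1) S" "S P0 = of_nat (m - 1) * b"
    "\<forall>x y z. (x + b * y) ^ (m - 1) - x ^ (m - 1) = y * S (x, y, z)"
    using hp_S[of "m - 1" b] by blast
  obtain QB where QB: "hp (m - 1) QB" "QB P0 = of_nat m * b * snd t P0"
    "\<forall>x y z. snd t (x + b * y, y, z) - snd t (x, y, z) = y * QB (x, y, z)"
    using hp_Q[OF hB, of b] by blast
  define G where "G = (\<lambda>z. act (1, b, 0, 1) (cv p z))"
  have Gz: "G z = (1 + b * (-(z ^ Suc p)), -(z ^ Suc p), z)" for z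
    by (simp add: G_def act_def cv_def)
  define \<psi> where "\<psi> = (\<lambda>z. -((-(z ^ p) * Q1 (cv p z) + z * Q2 (cv p z) + c1 * S (cv p z)) * snd t (cv p z)
      - (-(z ^ p) * A1 (cv p z) + z * A2 (cv p z) + c1) * QB (cv p z)))"
  have eq: "fst ?h (cv p z) = z ^ Suc (Suc p) * \<psi> z" for z
  proof -
    have "fst ?h (cv p z) = fst t (G z) * snd t (cv p z) - fst t (cv p z) * snd t (G z)"
      by (simp add: rsub_def pull_def G_def)
    also have "\<dots> = z ^ Suc (Suc p) * \<psi> z" unfolding \<psi>_def
    proof (rule ring_b)
      show "fst t (G z) = (-(z ^ Suc p)) * A1 (G z) + z ^ 2 * A2 (G z) + c1 * (1 + b * (-(z ^ Suc p))) ^ (m - 1) * z"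
        using DEC unfolding Gz by simp
      show "A1 (G z) = A1 (cv p z) + (-(z ^ Suc p)) * Q1 (cv p z)"
        using Q1(2)[rule_format, of 1 "-(z ^ Suc p)" z] unfolding Gz cv_def by (simp add: algebra_simps)
      show "A2 (G z) = A2 (cv p z) + (-(z ^ Suc p)) * Q2 (cv p z)"
        using Q2(2)[rule_format, of 1 "-(z ^ Suc p)" z] unfolding Gz cv_def by (simp add: algebra_simps)
      show "(1 + b * (-(z ^ Suc p))) ^ (m - 1) = 1 + (-(z ^ Suc p)) * S (cv p z)"
        using S(3)[rule_format, of 1 "-(z ^ Suc p)" z] unfolding cv_def by (simp add: algebra_simps)
      show "fst t (cv p z) = (-(z ^ Suc p)) * A1 (cv p z) + z ^ 2 * A2 (cv p z) + c1 * z"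
        using DEC unfolding cv_def by simp
      show "snd t (G z) = snd t (cv p z) + (-(z ^ Suc p)) * QB (cv p z)"
        using QB(3)[rule_format, of 1 "-(z ^ Suc p)" z] unfolding Gz cv_def by (simp add: algebra_simps)
      show "-(z ^ Suc p) = -(z * z ^ p)" by simp
    qed
    finally show ?thesis .
  qed
  have PFpsi: "PF \<psi>" unfolding \<psi>_def
    by (intro PF_intros good_PF[OF Q1(1)] good_PF[OF Q2(1)] good_PF[OF S(1)] good_PF[OF hB]
        good_PF[OF hA1] good_PF[OF hA2] good_PF[OF QB(1)])
  have "z ^ Suc (Suc p) * \<psi> z = z ^ Suc (Suc (Suc p)) * q z" for z
  proof -
    have "z ^ Suc (Suc p) * \<psi> z = fst ?h (cv p z)" using eq[of z] by simp
    also have "\<dots> = z ^ Suc (Suc (Suc p)) * q z" using q(2) by blast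
    finally show ?thesis .
  qed
  from PF_L[OF inf PFpsi q(1) this] have psi0: "\<psi> 0 = 0" .
  have "\<psi> 0 = -((c1 * (of_nat (m - 1) * b)) * snd t P0 - c1 * (of_nat m * b * snd t P0))"
    using p2 S(2) QB(2) unfolding \<psi>_def by (simp add: zero_power)
  also have "\<dots> = c1 * b * snd t P0"
    using m1 by (simp add: of_nat_diff algebra_simps)
  finally have "\<psi> 0 = c1 * b * snd t P0" .
  then show False using psi0 c1 b0 B0 by simp
qed

lemma P3:
  assumes "h \<in> local_ring p P0" "\<And>v. fst h v = 0"
  shows "in_mpow p P0 n h"
  unfolding in_mpow_def
  by (rule conjI[OF assms(1)], rule exI[of _ 0]) (simp add: feq_def rzero_def assms(2))

lemma Bor_cases:
  assumes "g \<in> Bor"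
  shows "\<exists>a b d. g = (a, b, 0, d) \<and> a \<in> Fp \<and> b \<in> Fp \<and> d \<in> Fp \<and> a * d = (1::'a::field)"
  using assms unfolding Bor_def SL2_def by auto

lemma Fp01: "(0::'a::field) \<in> Fp" "(1::'a) \<in> Fp"
  unfolding Fp_def by (metis of_nat_0 rangeI, metis of_nat_1 rangeI)

lemma Unip_iff: "g \<in> Unip \<longleftrightarrow> (\<exists>b. g = (1, b, 0, 1) \<and> b \<in> (Fp :: 'a::field set))"
  unfolding Unip_def SL2_def using Fp01 by auto

lemma Unip_Bor: "Unip \<subseteq> (Bor :: 'a::field mat2 set)"
  unfolding Unip_def Bor_def by auto

theorem mainTheorem8:
  fixes p :: nat
  assumes "prime p" and "odd p"
    and "CHAR('a::field) = p"
    and "alg_closed TYPE('a)"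
  shows "\<forall>t :: 'a rep. local_param p P0 t \<longrightarrow>
           (\<forall>i::int. i \<ge> -1 \<longrightarrow>
              ram_group p P0 t i =
                (if i \<le> 0 then Bor
                 else if i \<le> int p + 1 then Unip
                 else {(1, 0, 0, 1)}))"
proof (intro allI impI)
  fix t :: "'a rep" and i :: int
  assume lp: "local_param p P0 t" and i1: "i \<ge> -1"
  have pr: "prime p" "CHAR('a) = p" "alg_closed TYPE('a)" using assms by auto
  have p2: "p \<ge> 2" using assms(1) prime_ge_2_nat by blast
  have p0: "p > 0" using p2 by simp
  from LP[OF p2 lp] obtain m A1 A2 c1 where L: "hp m (fst t)" "hp m (snd t)" "m \<ge> 1" "fst t P0 = 0"
    "snd t P0 \<noteq> 0" "hp (m - 1) A1" "hp (m - 2) A2" "c1 \<noteq> 0"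
    "\<forall>x y z. fst t (x, y, z) = y * A1 (x, y, z) + z ^ 2 * A2 (x, y, z) + c1 * x ^ (m - 1) * z"
    by blast
  have gt: "good t" using L(1,2) unfolding good_def by blast
  note cA = caseA[OF pr p2 L(1-9)]
  note cB = caseB[OF pr p2 L(1-9)]
  have hmax: "\<And>a b d. a \<noteq> 0 \<Longrightarrow> rsub (pull (a, b, 0, d) t) t \<in> max_ideal p P0"
    using h_max[OF p0 gt L(4,5)] by blast
  let ?R = "\<lambda>n. {g \<in> Bor. in_mpow p P0 n (rsub (pull g t) t)}"
  have RG: "i \<ge> 0 \<Longrightarrow> ram_group p P0 t i = ?R (nat (i + 1))"
    unfolding ram_group_def stab_Bor by simp
  have notA: "g \<notin> ?R n" if "n \<ge> 2" "g = (a, b, 0, d)" "a \<noteq> 0" "a \<noteq> 1" for g a b d n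
    using cA[OF that(3,4,1)] that(2) by auto
  have BorE: "\<exists>a b d. g = (a, b, 0, d) \<and> a \<noteq> 0 \<and> (a = 1 \<longrightarrow> d = 1) \<and> b \<in> Fp" if gB: "g \<in> Bor" for g :: "'a mat2"
  proof -
    obtain a b d where "g = (a, b, 0, d)" "a \<in> Fp" "b \<in> Fp" "d \<in> Fp" "a * d = 1"
      using Bor_cases[OF gB] by blast
    then show ?thesis by (intro exI[of _ a] exI[of _ b] exI[of _ d]) auto
  qed
  show "ram_group p P0 t i = (if i \<le> 0 then Bor else if i \<le> int p + 1 then Unip else {(1, 0, 0, 1)})"
  proof (cases "i = -1")
    case True
    then show ?thesis unfolding ram_group_def stab_Bor by simp
  next
    case False
    then have i0: "i \<ge> 0" using i1 by simp
    show ?thesis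
    proof (cases "i = 0")
      case True
      have "?R 1 = Bor"
      proof (intro subset_antisym subsetI)
        fix g :: "'a mat2" assume "g \<in> Bor"
        then obtain a b d where g: "g = (a, b, 0, d)" "a \<noteq> 0" using BorE[OF \<open>g \<in> Bor\<close>] by blast
        show "g \<in> ?R 1" using P1[OF p0 hmax[OF g(2)]] \<open>g \<in> Bor\<close> g by auto
      qed auto
      then show ?thesis using RG i0 True by simp
    next
      case False
      then have i1': "i \<ge> 1" using i0 by simp
      define n where "n = nat (i + 1)"
      have n2: "n \<ge> 2" using i1' by (simp add: n_def)
      show ?thesis
      proof (cases "i \<le> int p + 1")
        case True
        have np: "n \<le> p + 2" using True by (simp add: n_def)
        have "?R n = Unip"
        proof (intro subset_antisym subsetI)
          fix g :: "'a mat2" assume gR: "g \<in> ?R n"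
          then have "g \<in> Bor" by simp
          then obtain a b d where g: "g = (a, b, 0, d)" "a \<noteq> 0" "a = 1 \<longrightarrow> d = 1" "b \<in> Fp" using BorE[OF \<open>g \<in> Bor\<close>] by blast
          have "a = 1" using notA[OF n2 g(1,2)] gR by blast
          then show "g \<in> Unip" using g Unip_iff[of g] by auto
        next
          fix g :: "'a mat2" assume "g \<in> Unip"
          then obtain b where g: "g = (1, b, 0, 1)" using Unip_iff[of g] by blast
          have "in_mpow p P0 n (rsub (pull (1, b, 0, 1) t) t)"
            by (rule P2[OF p2 L(1,2,3,4,5)]) (use n2 np in auto)
          then show "g \<in> ?R n" using Unip_Bor \<open>g \<in> Unip\<close> g by auto
        qed
        then show ?thesis using RG[OF i0] True i1' by (simp add: n_def)
      next
        case False2: False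
        have np: "n \<ge> p + 3" using False2 by (simp add: n_def)
        have "?R n = {(1, 0, 0, 1)}"
        proof (intro subset_antisym subsetI)
          fix g :: "'a mat2" assume gR: "g \<in> ?R n"
          then have "g \<in> Bor" by simp
          then obtain a b d where g: "g = (a, b, 0, d)" "a \<noteq> 0" "a = 1 \<longrightarrow> d = 1" "b \<in> Fp" using BorE[OF \<open>g \<in> Bor\<close>] by blast
          have a1: "a = 1" using notA[OF n2 g(1,2)] gR by blast
          then have g1: "g = (1, b, 0, 1)" using g by simp
          have "b = 0"
          proof (rule ccontr)
            assume "b \<noteq> 0"
            from cB[OF this np] gR g1 show False by simp
          qed
          then show "g \<in> {(1, 0, 0, 1)}" using g1 by simp
        next
          fix g :: "'a mat2" assume "g \<in> {(1::'a, 0::'a, 0::'a, 1::'a)}"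
          then have g: "g = (1, 0, 0, 1)" by simp
          have "(1::'a, 0::'a, 0::'a, 1::'a) \<in> Unip" using Unip_iff[of "(1, 0, 0, 1)"] Fp01 by auto
          then have gB: "g \<in> Bor" using Unip_Bor g by auto
          have hl: "rsub (pull (1, 0, 0, 1) t) t \<in> local_ring p P0"
            using hmax[of 1 0 1] by (simp add: max_ideal_def)
          have "in_mpow p P0 n (rsub (pull (1, 0, 0, 1) t) t)"
            by (rule P3[OF hl]) (simp add: rsub_def pull_def act_def split: prod.splits)
          then show "g \<in> ?R n" using gB g by simp
        qed
        then show ?thesis using RG[OF i0] False2 False i1' by (simp add: n_def)
      qed
    qed
  qed
qed

end
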